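(* Let $\mu$ be a probability measure on $[0,1]$, absolutely continuous with continuous density $f_\mu$, and let $q\in(0,1)$. Then the problem $\min_{y\in[0,1]}\mathcal{W}(y)$, where $\mathcal{W}(y)=\int_{[y-R_{\mu,q}(y),\,y+R_{\mu,q}(y)]}|x-y|\,d\mu(x)$, admits at least one solution. Moreover, if $\bar y$ is a solution, then the percentile mechanism $\mathcal{PM}_{p}$ with $p=F_\mu(\bar y)$ is optimal.
   Context: $F_\mu$ is the cumulative distribution function of $\mu$. The radius function $R_{\mu,q}(y)$ is the smallest $r\ge 0$ with $\mu([y-r,y+r])=q$. Single-facility setting: $n$ agents at $\vec x=(x_1,\dots,x_n)\in[0,1]^n$; a facility at $y$ accommodates the $\lfloor qn\rfloor$ agents closest to $y$ (ties arbitrary); an accommodated agent $i$ gets utility $1-|x_i-y|$, others get $0$; the normalized social welfare is $SW(\vec x,y)=\frac1n\sum_i u_i$. For $p\in[0,1]$, the percentile mechanism $\mathcal{PM}_p$ places the facility at the $(\lfloor p(n-1)\rfloor+1)$-th smallest of $x_1,\dots,x_n$. With $X_1,\dots,X_n$ i.i.d. of law $\mu$, $\mathcal{PM}_p$ is called optimal if $\lim_{n\to\infty}\mathbb{E}[SW(\vec X,\mathcal{PM}_p(\vec X))]$ exists and equals $\max_{y\in[0,1]}\big(q-\mathcal{W}(y)\big)$ (the largest limiting expected social welfare achievable by any fixed facility position). *)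

theory Defs
  imports "HOL-Probability.Probability"
begin

definition mu_of :: "(real \<Rightarrow> real) \<Rightarrow> real measure" where
  "mu_of f = density lborel (\<lambda>x. ennreal (f x) * indicator {0..1} x)"

definition cdf_of :: "real measure \<Rightarrow> real \<Rightarrow> real" where
  "cdf_of M y = measure M {..y}"

definition radius :: "real measure \<Rightarrow> real \<Rightarrow> real \<Rightarrow> real" where
  "radius M q y = Inf {r. r \<ge> 0 \<and> measure M {y - r..y + r} = q}"

definition W_cost :: "real measure \<Rightarrow> real \<Rightarrow> real \<Rightarrow> real" where
  "W_cost M q y = (LINT x:{y - radius M q y..y + radius M q y}|M. \<bar>x - y\<bar>)"

definition accommodated_sets :: "real \<Rightarrow> nat \<Rightarrow> (nat \<Rightarrow> real) \<Rightarrow> real \<Rightarrow> nat set set" where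
  "accommodated_sets q n x y =
     {S. S \<subseteq> {..<n} \<and> card S = nat \<lfloor>q * real n\<rfloor> \<and>
         (\<forall>i\<in>S. \<forall>j\<in>{..<n} - S. \<bar>x i - y\<bar> \<le> \<bar>x j - y\<bar>)}"

definition social_welfare :: "real \<Rightarrow> nat \<Rightarrow> (nat \<Rightarrow> real) \<Rightarrow> real \<Rightarrow> real" where
  "social_welfare q n x y =
     (let S = (SOME S. S \<in> accommodated_sets q n x y)
      in (1 / real n) * (\<Sum>i\<in>S. 1 - \<bar>x i - y\<bar>))"

text \<open>Percentile mechanism: the (floor(p(n-1))+1)-th smallest of x_0..x_{n-1}.\<close>
definition percentile_mech :: "real \<Rightarrow> nat \<Rightarrow> (nat \<Rightarrow> real) \<Rightarrow> real" where
  "percentile_mech p n x = sort (map x [0..<n]) ! nat \<lfloor>p * (real n - 1)\<rfloor>"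

definition expected_SW_PM :: "real measure \<Rightarrow> real \<Rightarrow> real \<Rightarrow> nat \<Rightarrow> real" where
  "expected_SW_PM M q p n =
     (\<integral>x. social_welfare q n x (percentile_mech p n x) \<partial>(PiM {..<n} (\<lambda>_. M)))"

definition PM_optimal :: "real measure \<Rightarrow> real \<Rightarrow> real \<Rightarrow> bool" where
  "PM_optimal M q p \<longleftrightarrow>
     (\<exists>L. (expected_SW_PM M q p \<longlonglongrightarrow> L) \<and>
          L \<in> (\<lambda>y. q - W_cost M q y) ` {0..1} \<and>
          (\<forall>y\<in>{0..1}. q - W_cost M q y \<le> L))"

end

theory Submission
  imports Defs
begin


locale tctx =
  fixes f :: "real \<Rightarrow> real" and q :: real
  assumes f_cont: "continuous_on {0..1} f"
    and f_nonneg: "\<And>x. x \<in> {0..1} \<Longrightarrow> 0 \<le> f x"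
    and prob: "prob_space (mu_of f)"
    and q0: "0 < q" and q1: "q < 1"
begin

abbreviation "Mu \<equiv> mu_of f"

lemma sets_Mu [simp, measurable_cong]: "sets Mu = sets borel"
  by (simp add: mu_of_def)

lemma space_Mu [simp]: "space Mu = UNIV"
  by (simp add: mu_of_def)

lemma f_meas: "(\<lambda>x. ennreal (f x) * indicator {0..1} x) \<in> borel_measurable borel"
proof -
  have "(\<lambda>x. indicator {0..1} x *\<^sub>R f x) \<in> borel_measurable borel"
    by (intro borel_measurable_continuous_on_indicator f_cont) auto
  then have "(\<lambda>x. ennreal (indicator {0..1} x *\<^sub>R f x)) \<in> borel_measurable borel" by measurable
  moreover have "(\<lambda>x. ennreal (indicator {0..1} x *\<^sub>R f x)) = (\<lambda>x. ennreal (f x) * indicator {0..1} x)"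
    by (auto simp: indicator_def fun_eq_iff)
  ultimately show ?thesis by simp
qed

lemma emeasure_Mu: "A \<in> sets borel \<Longrightarrow> emeasure Mu A = (\<integral>\<^sup>+ x. ennreal (f x) * indicator {0..1} x * indicator A x \<partial>lborel)"
  unfolding mu_of_def by (subst emeasure_density) (auto intro!: nn_integral_cong f_meas simp: mult.commute)

sublocale P: prob_space Mu by (rule prob)

lemma f_bound: obtains K where "K > 0" "\<And>x. x \<in> {0..1} \<Longrightarrow> f x \<le> K"
proof -
  have "bounded (f ` {0..1})"
    by (intro compact_imp_bounded compact_continuous_image f_cont) auto
  then obtain B where "\<forall>x\<in>f ` {0..1}. \<bar>x\<bar> \<le> B" by (auto simp: bounded_real)
  then show ?thesis
    by (intro that[of "\<bar>B\<bar> + 1"]) force+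
qed

definition "K = (SOME K. K > 0 \<and> (\<forall>x\<in>{0..1}. f x \<le> K))"

lemma K: "K > 0" "\<And>x. x \<in> {0..1} \<Longrightarrow> f x \<le> K"
proof -
  have "\<exists>K. K > 0 \<and> (\<forall>x\<in>{0..1}. f x \<le> K)" using f_bound by metis
  from someI_ex[OF this] show "K > 0" "\<And>x. x \<in> {0..1} \<Longrightarrow> f x \<le> K" unfolding K_def by auto
qed

lemma emeasure_Icc_le: "a \<le> b \<Longrightarrow> emeasure Mu {a..b} \<le> ennreal (K * (b - a))"
proof -
  assume ab: "a \<le> b"
  have "emeasure Mu {a..b} = (\<integral>\<^sup>+ x. ennreal (f x) * indicator {0..1} x * indicator {a..b} x \<partial>lborel)"
    by (simp add: emeasure_Mu)
  also have "\<dots> \<le> (\<integral>\<^sup>+ x. ennreal K * indicator {a..b} x \<partial>lborel)"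
    using K by (intro nn_integral_mono) (auto simp: indicator_def)
  also have "\<dots> = ennreal K * (b - a)"
    using ab by (simp add: nn_integral_cmult)
  finally show ?thesis using K ab by (simp add: ennreal_mult)
qed

lemma measure_Icc_le: "a \<le> b \<Longrightarrow> measure Mu {a..b} \<le> K * (b - a)"
  using emeasure_Icc_le[of a b] K
  by (simp add: P.emeasure_eq_measure ennreal_le_iff)

lemma measure_sub_Icc_le: "A \<in> sets borel \<Longrightarrow> A \<subseteq> {a..b} \<Longrightarrow> a \<le> b \<Longrightarrow> measure Mu A \<le> K * (b - a)"
  by (rule order_trans[OF P.finite_measure_mono measure_Icc_le]) auto

lemma measure_sing: "measure Mu {c} = 0"
  using measure_Icc_le[of c c] by (simp add: measure_nonneg antisym)

lemma AE_01: "AE x in Mu. x \<in> {0..1}"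
  proof -
  have m: "(\<lambda>x. ennreal (f x) * indicator {0..1} x) \<in> borel_measurable lborel"
    using f_meas by simp
  show ?thesis unfolding mu_of_def by (subst AE_density[OF m]) (auto simp: indicator_def)
qed

lemma measure_01: "measure Mu {0..1} = 1"
  using P.prob_Collect_eq_1[of "\<lambda>x. x \<in> {0..1}"] AE_01 by (simp del: atLeastAtMost_iff)

lemma measure_restr01: "A \<in> sets borel \<Longrightarrow> measure Mu A = measure Mu (A \<inter> {0..1})"
  by (rule measure_eq_AE) (use AE_01 in auto)

abbreviation "F \<equiv> cdf_of Mu"

lemma F_def': "F y = measure Mu {..y}" by (simp add: cdf_of_def)

lemma F_mono: "s \<le> t \<Longrightarrow> F s \<le> F t"
  unfolding F_def' by (intro P.finite_measure_mono) auto

lemma F_diff: "s \<le> t \<Longrightarrow> F t - F s = measure Mu {s<..t}"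
proof -
  assume st: "s \<le> t"
  have "{..t} = {..s} \<union> {s<..t}" using st by auto
  then have "measure Mu {..t} = measure Mu {..s} + measure Mu {s<..t}"
    by (simp add: P.finite_measure_Union[of "{..s}" "{s<..t}"] disjoint_iff)
  then show ?thesis by (simp add: F_def')
qed

lemma F_lip: "s \<le> t \<Longrightarrow> F t - F s \<le> K * (t - s)"
proof -
  assume st: "s \<le> t"
  have "measure Mu {s<..t} \<le> K * (t - s)"
    by (rule measure_sub_Icc_le) (use st in auto)
  then show ?thesis using F_diff[OF st] by simp
qed

lemma F_lip_abs: "\<bar>F t - F s\<bar> \<le> K * \<bar>t - s\<bar>"
  using F_lip[of s t] F_lip[of t s] F_mono[of s t] F_mono[of t s]
  by (cases "s \<le> t") (auto simp: abs_if)

lemma F_cont: "continuous_on A F"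
proof -
  have "K-lipschitz_on A F"
    by (rule lipschitz_onI) (use F_lip_abs K in \<open>auto simp: dist_real_def\<close>)
  then show ?thesis by (rule lipschitz_on_continuous_on)
qed

lemma F_neg: "t < 0 \<Longrightarrow> F t = 0"
  by (subst F_def', subst measure_restr01) auto

lemma F_zero: "F 0 = 0"
proof -
  have "F 0 = measure Mu ({..0} \<inter> {0..1})" by (subst F_def', subst measure_restr01) auto
  also have "{..0} \<inter> {0..1} = {0::real}" by auto
  finally show ?thesis by (simp add: measure_sing)
qed

lemma F_one: "1 \<le> t \<Longrightarrow> F t = 1"
proof -
  assume "1 \<le> t"
  then have "{..t} \<inter> {0..1} = {0..1::real}" by auto
  then show ?thesis by (subst F_def', subst measure_restr01) (auto simp: measure_01)
qed

definition "gball y r = measure Mu {y - r..y + r}"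

lemma gball_lip: "0 \<le> r \<Longrightarrow> r \<le> r' \<Longrightarrow> gball y r' - gball y r \<le> 2 * K * (r' - r)"
proof -
  assume r: "0 \<le> r" "r \<le> r'"
  have "gball y r' - gball y r = measure Mu ({y - r'..y + r'} - {y - r..y + r})"
    unfolding gball_def using r by (subst P.finite_measure_Diff) auto
  also have "\<dots> \<le> measure Mu ({y - r'..y - r} \<union> {y + r..y + r'})"
    by (intro P.finite_measure_mono) auto
  also have "\<dots> \<le> measure Mu {y - r'..y - r} + measure Mu {y + r..y + r'}"
    by (intro measure_Un_le) auto
  also have "\<dots> \<le> K * (r' - r) + K * (r' - r)"
    using r by (intro add_mono) (auto intro: order_trans[OF measure_Icc_le])
  finally show ?thesis by simp
qed

lemma gball_mono: "0 \<le> r \<Longrightarrow> r \<le> r' \<Longrightarrow> gball y r \<le> gball y r'"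
  unfolding gball_def by (intro P.finite_measure_mono) auto

lemma gball_cont: "continuous_on {0..} (gball y)"
proof -
  have "(2*K)-lipschitz_on {0..} (gball y)"
  proof (rule lipschitz_onI)
    fix a b :: real assume ab: "a \<in> {0..}" "b \<in> {0..}"
    show "dist (gball y a) (gball y b) \<le> 2 * K * dist a b"
    proof (cases "a \<le> b")
      case True then show ?thesis using ab gball_lip[of a b y] gball_mono[of a b y]
        by (auto simp: dist_real_def)
    next
      case False then show ?thesis using ab gball_lip[of b a y] gball_mono[of b a y]
        by (auto simp: dist_real_def)
    qed
  qed (use K in auto)
  then show ?thesis by (rule lipschitz_on_continuous_on)
qed

lemma gball0: "gball y 0 = 0"
  unfolding gball_def by (simp add: measure_sing)

lemma gball1: "y \<in> {0..1} \<Longrightarrow> gball y 1 = 1"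
proof -
  assume y: "y \<in> {0..1}"
  have "gball y 1 = measure Mu ({y - 1..y + 1} \<inter> {0..1})"
    unfolding gball_def by (subst measure_restr01) auto
  also have "{y - 1..y + 1} \<inter> {0..1} = {0..1::real}" using y by auto
  finally show ?thesis by (simp add: measure_01)
qed

definition "rad y = radius Mu q y"

lemma rad_props:
  assumes y: "y \<in> {0..1}"
  shows "0 \<le> rad y" "rad y \<le> 1" "measure Mu {y - rad y..y + rad y} = q"
proof -
  define R where "R = {r \<in> {0..}. gball y r = q}"
  have R_eq: "{r. r \<ge> 0 \<and> measure Mu {y - r..y + r} = q} = R"
    unfolding R_def gball_def by auto
  obtain r0 where r0: "0 \<le> r0" "r0 \<le> 1" "gball y r0 = q"
    using IVT'[of "gball y" 0 q 1] gball0 gball1[OF y] q0 q1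
      continuous_on_subset[OF gball_cont[of y], of "{0..1}"] by force
  have "R \<noteq> {}" using r0 unfolding R_def by auto
  moreover have "bdd_below R" unfolding R_def by (auto intro: bdd_belowI[of _ 0])
  moreover have "closed R" unfolding R_def
    by (intro continuous_closed_preimage_constant gball_cont) (simp add: closed_atLeast)
  ultimately have "Inf R \<in> R" by (rule closed_contains_Inf)
  moreover have "rad y = Inf R" unfolding rad_def radius_def R_eq ..
  moreover have "Inf R \<le> r0" using r0 \<open>bdd_below R\<close> unfolding R_def by (intro cInf_lower) auto
  ultimately show "0 \<le> rad y" "rad y \<le> 1" "measure Mu {y - rad y..y + rad y} = q"
    using r0 unfolding R_def gball_def by auto
qed

end

context tctx begin

definition "Bl y = {y - rad y..y + rad y}"
definition "Phi A t = (\<integral>x. indicator A x * \<bar>x - t\<bar> \<partial>Mu)"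
abbreviation "W \<equiv> W_cost Mu q"

lemma W_eq: "W y = Phi (Bl y) y"
  by (simp add: W_cost_def Phi_def Bl_def rad_def set_lebesgue_integral_def)

lemma Bl_borel [measurable]: "Bl y \<in> sets borel" by (simp add: Bl_def)

lemma integrable01:
  fixes B :: real
  assumes "h \<in> borel_measurable borel" "\<And>x. x \<in> {0..1} \<Longrightarrow> \<bar>h x\<bar> \<le> B"
  shows "integrable Mu h"
proof (rule P.integrable_const_bound[of _ B])
  show "AE x in Mu. norm (h x) \<le> B" using AE_01 by (rule eventually_mono) (simp add: assms(2))
  show "h \<in> borel_measurable Mu" using assms(1) by (subst measurable_cong_sets[OF sets_Mu refl])
qed

lemma int_ind_abs: "A \<in> sets borel \<Longrightarrow> integrable Mu (\<lambda>x. indicator A x * \<bar>x - t\<bar>)"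
proof (rule integrable01[of _ "1 + \<bar>t\<bar>"])
  assume [measurable]: "A \<in> sets borel"
  show "(\<lambda>x. indicator A x * \<bar>x - t\<bar>) \<in> borel_measurable borel" by measurable
qed (auto simp: indicator_def)

lemma int_ind: "A \<in> sets borel \<Longrightarrow> integrable Mu (indicator A :: real \<Rightarrow> real)"
proof (rule integrable01[of _ 1])
  assume [measurable]: "A \<in> sets borel"
  show "(indicator A :: real \<Rightarrow> real) \<in> borel_measurable borel" by measurable
qed (auto simp: indicator_def)

lemma int_indicator: "A \<in> sets borel \<Longrightarrow> (\<integral>x. indicator A x \<partial>Mu) = measure Mu A"
  by simp

lemma measure_Bl: "y \<in> {0..1} \<Longrightarrow> measure Mu (Bl y) = q"
  using rad_props by (simp add: Bl_def)

lemma bathtub: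
  assumes y: "y \<in> {0..1}" and A: "A \<in> sets borel" "measure Mu A = q"
  shows "W y \<le> Phi A y"
proof -
  define r where "r = rad y"
  define B where "B = Bl y"
  have B: "B \<in> sets borel" unfolding B_def by simp
  have Bdef: "B = {y - r..y + r}" unfolding B_def Bl_def r_def ..
  have "0 \<le> (\<integral>x. (indicator A x - indicator B x) * (\<bar>x - y\<bar> - r) \<partial>Mu)"
    by (intro Bochner_Integration.integral_nonneg) (auto simp: indicator_def Bdef)
  also have "(\<lambda>x. (indicator A x - indicator B x) * (\<bar>x - y\<bar> - r)) =
      (\<lambda>x. (indicator A x * \<bar>x - y\<bar> - indicator B x * \<bar>x - y\<bar>) + (r * indicator B x - r * indicator A x))"
    by (auto simp: fun_eq_iff algebra_simps)
  also have "(\<integral>x. (indicator A x * \<bar>x - y\<bar> - indicator B x * \<bar>x - y\<bar>) + (r * indicator B x - r * indicator A x) \<partial>Mu)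
     = (Phi A y - Phi B y) + (r * measure Mu B - r * measure Mu A)"
    using A B int_ind_abs int_ind
    by (simp add: Phi_def Bochner_Integration.integral_add Bochner_Integration.integral_diff int_indicator)
  finally show ?thesis using A measure_Bl[OF y] by (simp add: W_eq B_def)
qed

lemma W_lip1:
  assumes y: "y \<in> {0..1}" and t: "t \<in> {0..1}"
  shows "W t \<le> W y + q * \<bar>t - y\<bar>"
proof -
  have "W t \<le> Phi (Bl y) t" by (rule bathtub[OF t]) (auto simp: measure_Bl[OF y])
  also have "\<dots> \<le> (\<integral>x. indicator (Bl y) x * \<bar>x - y\<bar> + \<bar>t - y\<bar> * indicator (Bl y) x \<partial>Mu)"
    unfolding Phi_def
    by (intro integral_mono int_ind_abs Bochner_Integration.integrable_add integrable_mult_right int_ind)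
       (auto simp: indicator_def)
  also have "\<dots> = W y + q * \<bar>t - y\<bar>"
    using int_ind_abs int_ind measure_Bl[OF y]
    by (simp add: W_eq Phi_def Bochner_Integration.integral_add int_indicator)
  finally show ?thesis .
qed

lemma W_lip: "y \<in> {0..1} \<Longrightarrow> t \<in> {0..1} \<Longrightarrow> \<bar>W t - W y\<bar> \<le> q * \<bar>t - y\<bar>"
  using W_lip1[of y t] W_lip1[of t y] by (auto simp: abs_minus_commute)

lemma W_cont: "continuous_on {0..1} W"
proof -
  have "q-lipschitz_on {0..1} W"
    by (rule lipschitz_onI) (use W_lip q0 in \<open>auto simp: dist_real_def\<close>)
  then show ?thesis by (rule lipschitz_on_continuous_on)
qed

lemma W_min_exists: "\<exists>y\<in>{0..1}. \<forall>z\<in>{0..1}. W y \<le> W z"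
  by (intro continuous_attains_inf W_cont) auto


lemma meas_le_union: "A \<in> sets borel \<Longrightarrow> B \<in> sets borel \<Longrightarrow> C \<in> sets borel \<Longrightarrow> A \<subseteq> B \<union> C \<Longrightarrow>
   measure Mu A \<le> measure Mu B + measure Mu C"
  by (rule order_trans[OF P.finite_measure_mono measure_Un_le]) auto

lemma Phi_diff_le:
  assumes A: "A \<in> sets borel" and A1: "A1 \<in> sets borel" and A2: "A2 \<in> sets borel"
    and le: "\<And>x. indicator A x * (\<bar>x - y\<bar> - \<bar>x - t\<bar>) \<le> c * (indicator A1 x - indicator A2 x)"
  shows "Phi A y - Phi A t \<le> c * (measure Mu A1 - measure Mu A2)"
proof -
  have "Phi A y - Phi A t = (\<integral>x. indicator A x * \<bar>x - y\<bar> - indicator A x * \<bar>x - t\<bar> \<partial>Mu)"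
    unfolding Phi_def using A by (simp add: Bochner_Integration.integral_diff int_ind_abs)
  also have "\<dots> \<le> (\<integral>x. c * indicator A1 x - c * indicator A2 x \<partial>Mu)"
    using A A1 A2 le
    by (intro integral_mono Bochner_Integration.integrable_diff int_ind_abs integrable_mult_right int_ind)
       (auto simp: algebra_simps)
  also have "\<dots> = c * (measure Mu A1 - measure Mu A2)"
    using A1 A2 int_ind by (simp add: Bochner_Integration.integral_diff algebra_simps)
  finally show ?thesis .
qed

lemma Phi_diff_eq_AE:
  assumes A: "A \<in> sets borel" and A1: "A1 \<in> sets borel" and A2: "A2 \<in> sets borel"
    and N: "N \<in> sets borel" "measure Mu N = 0"
    and eq: "\<And>x. x \<notin> N \<Longrightarrow> indicator A x * (\<bar>x - y\<bar> - \<bar>x - t\<bar>) = c * (indicator A1 x - indicator A2 x)"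
  shows "Phi A y - Phi A t = c * (measure Mu A1 - measure Mu A2)"
proof -
  have AE: "AE x in Mu. x \<notin> N"
    using N by (intro AE_not_in) (simp add: P.emeasure_eq_measure null_sets_def)
  have "Phi A y - Phi A t = (\<integral>x. indicator A x * \<bar>x - y\<bar> - indicator A x * \<bar>x - t\<bar> \<partial>Mu)"
    unfolding Phi_def using A by (simp add: Bochner_Integration.integral_diff int_ind_abs)
  also have "\<dots> = (\<integral>x. c * indicator A1 x - c * indicator A2 x \<partial>Mu)"
  proof (rule integral_cong_AE)
    show "AE x in Mu. indicator A x * \<bar>x - y\<bar> - indicator A x * \<bar>x - t\<bar> = c * indicator A1 x - c * indicator A2 x"
      using AE by (rule eventually_mono) (metis eq right_diff_distrib)
  qed (use A A1 A2 in simp_all)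
  also have "\<dots> = c * (measure Mu A1 - measure Mu A2)"
    using A1 A2 int_ind by (simp add: Bochner_Integration.integral_diff algebra_simps)
  finally show ?thesis .
qed


lemma meas_Icc0: "F t = F s \<Longrightarrow> s \<le> t \<Longrightarrow> measure Mu {s..t} = 0"
proof -
  assume Ft: "F t = F s" and st: "s \<le> t"
  have "measure Mu {s..t} \<le> measure Mu {s} + measure Mu {s<..t}"
    by (rule meas_le_union) auto
  also have "\<dots> = 0" using F_diff[OF st] Ft by (simp add: measure_sing)
  finally show ?thesis by (simp add: antisym measure_nonneg)
qed

lemma W_const:
  assumes yb: "ybar \<in> {0..1}" and mn: "\<forall>z\<in>{0..1}. W ybar \<le> W z"
    and t: "t \<in> {0..1}" and Ft: "F t = F ybar"
  shows "W t = W ybar"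
proof -
  define A where "A = Bl ybar"
  have A: "A \<in> sets borel" "measure Mu A = q" using measure_Bl[OF yb] by (auto simp: A_def)
  define L where "L = measure Mu (A \<inter> {..<ybar})"
  define R where "R = measure Mu (A \<inter> {ybar<..})"
  have WA: "W ybar = Phi A ybar" by (simp add: W_eq A_def)
  have ge: "W ybar \<le> W t" using mn t by auto
  consider "t = ybar" | "ybar < t" | "t < ybar" by linarith
  then show ?thesis
  proof cases
    case 1 then show ?thesis by simp
  next
    case 2
    have N0: "measure Mu {ybar..t} = 0" using meas_Icc0[OF Ft] 2 by simp
    have eqPhi: "Phi A t - Phi A ybar = (t - ybar) * (L - R)"
      unfolding L_def R_def
    proof (rule Phi_diff_eq_AE[OF A(1) _ _ _ N0])
      fix x assume "x \<notin> {ybar..t}"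
      then have "x < ybar \<or> t < x" by auto
      then show "indicator A x * (\<bar>x - t\<bar> - \<bar>x - ybar\<bar>) =
          (t - ybar) * (indicator (A \<inter> {..<ybar}) x - indicator (A \<inter> {ybar<..}) x)"
        using 2 by (auto simp: indicator_def)
    qed (use A in auto)
    have LR: "L \<le> R"
    proof (cases "ybar = 0")
      case True
      have "L \<le> measure Mu {..0}" unfolding L_def using True by (intro P.finite_measure_mono) auto
      also have "\<dots> = 0" using F_zero by (simp add: F_def')
      finally show ?thesis unfolding R_def using measure_nonneg[of Mu] by (meson order_trans)
    next
      case False
      then have yb0: "0 < ybar" using yb by auto
      show ?thesis
      proof (rule ccontr)
        assume "\<not> L \<le> R"
        define d where "d = L - R"
        have d: "d > 0" using \<open>\<not> L \<le> R\<close> by (simp add: d_def)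
        define y where "y = max 0 (ybar - d / (4 * K))"
        have Kp: "K > 0" by (rule K)
        have dK: "d / (4 * K) > 0" using d Kp by simp
        have y: "y \<in> {0..1}" "y < ybar" "ybar - y \<le> d / (4 * K)"
          using yb yb0 dK by (auto simp: y_def)
        have "W ybar \<le> W y" using mn y by auto
        also have "W y \<le> Phi A y" by (rule bathtub[OF y(1) A])
        finally have "0 \<le> Phi A y - Phi A ybar" using WA by simp
        also have "Phi A y - Phi A ybar \<le> (ybar - y) * (measure Mu (A \<inter> {y<..}) - measure Mu (A \<inter> {..y}))"
        proof (rule Phi_diff_le)
          fix x
          show "indicator A x * (\<bar>x - y\<bar> - \<bar>x - ybar\<bar>) \<le>
              (ybar - y) * (indicator (A \<inter> {y<..}) x - indicator (A \<inter> {..y}) x)"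
            using y by (auto simp: indicator_def)
        qed (use A in auto)
        finally have c: "0 \<le> (ybar - y) * (measure Mu (A \<inter> {y<..}) - measure Mu (A \<inter> {..y}))" .
        have m1: "measure Mu (A \<inter> {y<..}) \<le> R + K * (ybar - y)"
        proof -
          have "measure Mu (A \<inter> {y<..}) \<le> measure Mu (A \<inter> {ybar<..}) + measure Mu {y..ybar}"
            by (rule meas_le_union) (use A in auto)
          also have "measure Mu {y..ybar} \<le> K * (ybar - y)" using y by (intro measure_Icc_le) auto
          finally show ?thesis unfolding R_def by simp
        qed
        have m2: "L \<le> measure Mu (A \<inter> {..y}) + K * (ybar - y)"
        proof -
          have "L \<le> measure Mu (A \<inter> {..y}) + measure Mu {y..ybar}"
            unfolding L_def by (rule meas_le_union) (use A in auto)
          also have "measure Mu {y..ybar} \<le> K * (ybar - y)" using y by (intro measure_Icc_le) auto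
          finally show ?thesis by simp
        qed
        have "0 \<le> measure Mu (A \<inter> {y<..}) - measure Mu (A \<inter> {..y})"
          using c y(2) by (simp add: zero_le_mult_iff)
        then have "d \<le> 2 * K * (ybar - y)" using m1 m2 by (simp add: d_def)
        also have "\<dots> \<le> 2 * K * (d / (4 * K))" using y Kp by (intro mult_left_mono) auto
        also have "\<dots> = d / 2" using Kp by simp
        finally show False using d by simp
      qed
    qed
    have "W t \<le> Phi A t" by (rule bathtub[OF t A])
    also have "\<dots> = W ybar + (t - ybar) * (L - R)" using eqPhi WA by simp
    also have "\<dots> \<le> W ybar" using 2 LR by (simp add: mult_nonneg_nonpos)
    finally show ?thesis using ge by simp
  next
    case 3
    have N0: "measure Mu {t..ybar} = 0" using meas_Icc0[OF Ft[symmetric]] 3 by simp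
    have eqPhi: "Phi A t - Phi A ybar = (ybar - t) * (R - L)"
      unfolding L_def R_def
    proof (rule Phi_diff_eq_AE[OF A(1) _ _ _ N0])
      fix x assume "x \<notin> {t..ybar}"
      then have "x < t \<or> ybar < x" by auto
      then show "indicator A x * (\<bar>x - t\<bar> - \<bar>x - ybar\<bar>) =
          (ybar - t) * (indicator (A \<inter> {ybar<..}) x - indicator (A \<inter> {..<ybar}) x)"
        using 3 by (auto simp: indicator_def)
    qed (use A in auto)
    have LR: "R \<le> L"
    proof (cases "ybar = 1")
      case True
      have "R \<le> measure Mu {1<..}" unfolding R_def using True by (intro P.finite_measure_mono) auto
      also have "\<dots> = 0"
      proof -
        have "{1<..} \<inter> {0..1} = ({}::real set)" by auto
        then show ?thesis by (subst measure_restr01) auto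
      qed
      finally show ?thesis unfolding L_def using measure_nonneg[of Mu] by (meson order_trans)
    next
      case False
      then have yb1: "ybar < 1" using yb by auto
      show ?thesis
      proof (rule ccontr)
        assume "\<not> R \<le> L"
        define d where "d = R - L"
        have d: "d > 0" using \<open>\<not> R \<le> L\<close> by (simp add: d_def)
        define y where "y = min 1 (ybar + d / (4 * K))"
        have Kp: "K > 0" by (rule K)
        have dK: "d / (4 * K) > 0" using d Kp by simp
        have y: "y \<in> {0..1}" "ybar < y" "y - ybar \<le> d / (4 * K)"
          using yb yb1 dK by (auto simp: y_def)
        have "W ybar \<le> W y" using mn y by auto
        also have "W y \<le> Phi A y" by (rule bathtub[OF y(1) A])
        finally have "0 \<le> Phi A y - Phi A ybar" using WA by simp
        also have "Phi A y - Phi A ybar \<le> (y - ybar) * (measure Mu (A \<inter> {..<y}) - measure Mu (A \<inter> {y..}))"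
        proof (rule Phi_diff_le)
          fix x
          show "indicator A x * (\<bar>x - y\<bar> - \<bar>x - ybar\<bar>) \<le>
              (y - ybar) * (indicator (A \<inter> {..<y}) x - indicator (A \<inter> {y..}) x)"
            using y by (auto simp: indicator_def)
        qed (use A in auto)
        finally have c: "0 \<le> (y - ybar) * (measure Mu (A \<inter> {..<y}) - measure Mu (A \<inter> {y..}))" .
        have m1: "measure Mu (A \<inter> {..<y}) \<le> L + K * (y - ybar)"
        proof -
          have "measure Mu (A \<inter> {..<y}) \<le> measure Mu (A \<inter> {..<ybar}) + measure Mu {ybar..y}"
            by (rule meas_le_union) (use A in auto)
          also have "measure Mu {ybar..y} \<le> K * (y - ybar)" using y by (intro measure_Icc_le) auto
          finally show ?thesis unfolding L_def by simp
        qed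
        have m2: "R \<le> measure Mu (A \<inter> {y..}) + K * (y - ybar)"
        proof -
          have "R \<le> measure Mu (A \<inter> {y..}) + measure Mu {ybar..y}"
            unfolding R_def by (rule meas_le_union) (use A in auto)
          also have "measure Mu {ybar..y} \<le> K * (y - ybar)" using y by (intro measure_Icc_le) auto
          finally show ?thesis by simp
        qed
        have "0 \<le> measure Mu (A \<inter> {..<y}) - measure Mu (A \<inter> {y..})"
          using c y(2) by (simp add: zero_le_mult_iff)
        then have "d \<le> 2 * K * (y - ybar)" using m1 m2 by (simp add: d_def)
        also have "\<dots> \<le> 2 * K * (d / (4 * K))" using y Kp by (intro mult_left_mono) auto
        also have "\<dots> = d / 2" using Kp by simp
        finally show False using d by simp
      qed
    qed
    have "W t \<le> Phi A t" by (rule bathtub[OF t A])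
    also have "\<dots> = W ybar + (ybar - t) * (R - L)" using eqPhi WA by simp
    also have "\<dots> \<le> W ybar" using 3 LR by (simp add: mult_nonneg_nonpos)
    finally show ?thesis using ge by simp
  qed
qed

end


lemma sort_le_iff:
  fixes xs :: "real list"
  assumes j: "j < length xs"
  shows "sort xs ! j \<le> a \<longleftrightarrow> j < length (filter (\<lambda>v. v \<le> a) xs)"
proof -
  define s where "s = sort xs"
  have sorted: "sorted s" and len: "length s = length xs" by (simp_all add: s_def)
  have cnt: "length (filter (\<lambda>v. v \<le> a) xs) = length (filter (\<lambda>v. v \<le> a) s)"
    unfolding s_def by (metis mset_filter mset_sort size_mset)
  have cc: "length (filter (\<lambda>v. v \<le> a) s) = card {i. i < length s \<and> s ! i \<le> a}"
    by (rule length_filter_conv_card)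
  show ?thesis
  proof
    assume "sort xs ! j \<le> a"
    then have "s ! j \<le> a" by (simp add: s_def)
    then have "{..j} \<subseteq> {i. i < length s \<and> s ! i \<le> a}"
      using sorted_nth_mono[OF sorted] j len by (auto intro: order_trans)
    then have "card {..j} \<le> card {i. i < length s \<and> s ! i \<le> a}"
      by (intro card_mono) auto
    then show "j < length (filter (\<lambda>v. v \<le> a) xs)" using cnt cc by simp
  next
    assume a: "j < length (filter (\<lambda>v. v \<le> a) xs)"
    show "sort xs ! j \<le> a"
    proof (rule ccontr)
      assume "\<not> sort xs ! j \<le> a"
      then have "a < s ! j" by (simp add: s_def)
      have "{i. i < length s \<and> s ! i \<le> a} \<subseteq> {..<j}"
      proof
        fix i assume i: "i \<in> {i. i < length s \<and> s ! i \<le> a}"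
        show "i \<in> {..<j}"
        proof (rule ccontr)
          assume "i \<notin> {..<j}"
          then have "j \<le> i" by simp
          then have "s ! j \<le> s ! i" using sorted_nth_mono[OF sorted, of j i] i by simp
          then show False using i \<open>a < s ! j\<close> by simp
        qed
      qed
      then have "card {i. i < length s \<and> s ! i \<le> a} \<le> card {..<j}"
        by (intro card_mono) auto
      then show False using a cnt cc by simp
    qed
  qed
qed

lemma filter_map_upt_card:
  "length (filter P (map x [0..<n])) = card {i. i < n \<and> P (x i)}"
proof -
  have "length (filter P (map x [0..<n])) = card {i. i < n \<and> P (map x [0..<n] ! i)}"
    by (simp add: length_filter_conv_card)
  also have "{i. i < n \<and> P (map x [0..<n] ! i)} = {i. i < n \<and> P (x i)}" by auto
  finally show ?thesis .
qed

lemma sort_mem: "j < n \<Longrightarrow> sort (map x [0..<n]) ! j \<in> x ` {..<n}"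
proof -
  assume "j < n"
  then have "sort (map x [0..<n]) ! j \<in> set (sort (map x [0..<n]))" by (intro nth_mem) simp
  then show ?thesis by auto
qed

lemma percentile_le_iff:
  assumes "n > 0" "0 \<le> p" "p \<le> 1"
  shows "percentile_mech p n x \<le> a \<longleftrightarrow> nat \<lfloor>p * (real n - 1)\<rfloor> < card {i. i < n \<and> x i \<le> a}"
proof -
  have "p * (real n - 1) \<le> real n - 1" using assms by (intro mult_left_le_one_le) auto
  then have "real_of_int \<lfloor>p * (real n - 1)\<rfloor> < real n"
    using of_int_floor_le[of "p * (real n - 1)"] by linarith
  then have "\<lfloor>p * (real n - 1)\<rfloor> < int n" by linarith
  then have "nat \<lfloor>p * (real n - 1)\<rfloor> < n" using assms(1)
    by (cases "\<lfloor>p * (real n - 1)\<rfloor> < 0") (auto simp: nat_less_iff)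
  then show ?thesis unfolding percentile_mech_def
    by (subst sort_le_iff) (simp_all add: filter_map_upt_card[of "\<lambda>v. v \<le> a", simplified])
qed


lemma acc_ex:
  assumes kn: "nat \<lfloor>q * real n\<rfloor> \<le> n"
  shows "\<exists>S. S \<in> accommodated_sets q n x y"
proof -
  define k where "k = nat \<lfloor>q * real n\<rfloor>"
  define Fam where "Fam = {S. S \<subseteq> {..<n} \<and> card S = k}"
  define g where "g S = (\<Sum>i\<in>S. \<bar>x i - y\<bar>)" for S
  have finF: "finite Fam" unfolding Fam_def by (rule finite_subset[of _ "Pow {..<n}"]) auto
  obtain S1 where "S1 \<subseteq> {..<n}" "card S1 = k" using obtain_subset_with_card_n[of k "{..<n}"] kn k_def by auto
  then have neF: "Fam \<noteq> {}" unfolding Fam_def by auto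
  have "Min (g ` Fam) \<in> g ` Fam" using finF neF by (intro Min_in) auto
  then obtain S0 where S0: "S0 \<in> Fam" "g S0 = Min (g ` Fam)" by auto
  have S0min: "g S0 \<le> g S" if "S \<in> Fam" for S using S0(2) finF that by simp
  have S0n: "S0 \<subseteq> {..<n}" "card S0 = k" using S0(1) by (auto simp: Fam_def)
  have fin0: "finite S0" using S0n(1) finite_subset by blast
  have "\<forall>i\<in>S0. \<forall>j\<in>{..<n} - S0. \<bar>x i - y\<bar> \<le> \<bar>x j - y\<bar>"
  proof (intro ballI, rule ccontr)
    fix i j assume i: "i \<in> S0" and j: "j \<in> {..<n} - S0" and lt: "\<not> \<bar>x i - y\<bar> \<le> \<bar>x j - y\<bar>"
    define S' where "S' = insert j (S0 - {i})"
    have jn: "j \<notin> S0 - {i}" using j by auto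
    have "card S' = card (S0 - {i}) + 1" unfolding S'_def using fin0 jn by simp
    also have "card (S0 - {i}) = k - 1" using i fin0 S0n by simp
    also have "k - 1 + 1 = k" using i fin0 S0n card_gt_0_iff[of S0] by auto
    finally have "S' \<in> Fam" unfolding Fam_def S'_def using S0n(1) j i by auto
    then have "g S0 \<le> g S'" by (rule S0min)
    also have "g S' = \<bar>x j - y\<bar> + g (S0 - {i})" unfolding S'_def g_def using fin0 jn by simp
    also have "g (S0 - {i}) = g S0 - \<bar>x i - y\<bar>" unfolding g_def using fin0 i by (simp add: sum_diff1)
    finally show False using lt by simp
  qed
  then have "S0 \<in> accommodated_sets q n x y"
    unfolding accommodated_sets_def using S0n k_def by auto
  then show ?thesis by blast
qed

lemma acc_opt:
  assumes S: "S \<in> accommodated_sets q n x y" and S': "S' \<subseteq> {..<n}" "card S' = card S"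
  shows "(\<Sum>i\<in>S. \<bar>x i - y\<bar>) \<le> (\<Sum>i\<in>S'. \<bar>x i - y\<bar>)"
proof -
  define d where "d i = \<bar>x i - y\<bar>" for i
  have Sn: "S \<subseteq> {..<n}" and cl: "\<forall>i\<in>S. \<forall>j\<in>{..<n} - S. d i \<le> d j"
    using S unfolding accommodated_sets_def d_def by auto
  have finS: "finite S" "finite S'" using Sn S' finite_subset by auto
  define D1 where "D1 = S - S'"
  define D2 where "D2 = S' - S"
  have fD: "finite D1" "finite D2" using finS by (auto simp: D1_def D2_def)
  have cD: "card D1 = card D2"
  proof -
    have "card D1 = card S - card (S \<inter> S')" unfolding D1_def using finS by (simp add: card_Diff_subset_Int)
    moreover have "card D2 = card S' - card (S' \<inter> S)" unfolding D2_def using finS by (simp add: card_Diff_subset_Int)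
    ultimately show ?thesis using S' by (simp add: Int_commute)
  qed
  have sD: "sum d D1 \<le> sum d D2"
  proof (cases "D1 = {}")
    case True
    then have "D2 = {}" using cD fD by simp
    then show ?thesis using True by simp
  next
    case False
    define c where "c = Max (d ` D1)"
    have "c \<in> d ` D1" unfolding c_def using False fD by (intro Max_in) auto
    then obtain i0 where i0: "i0 \<in> D1" "c = d i0" by auto
    have "sum d D1 \<le> of_nat (card D1) * c"
      by (rule sum_bounded_above) (use fD in \<open>auto simp: c_def\<close>)
    also have "\<dots> \<le> sum d D2"
      unfolding cD by (rule sum_bounded_below) (use i0 cl S' in \<open>auto simp: D1_def D2_def\<close>)
    finally show ?thesis .
  qed
  have "sum d S = sum d (S \<inter> S') + sum d D1" unfolding D1_def using finS(1) by (rule sum.Int_Diff)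
  moreover have "sum d S' = sum d (S' \<inter> S) + sum d D2" unfolding D2_def using finS(2) by (rule sum.Int_Diff)
  ultimately show ?thesis using sD unfolding d_def by (simp add: Int_commute)
qed

lemma k_le_n: "0 \<le> q \<Longrightarrow> q \<le> 1 \<Longrightarrow> nat \<lfloor>q * real n\<rfloor> \<le> n"
proof -
  assume "0 \<le> q" "q \<le> 1"
  then have "q * real n \<le> real n" by (simp add: mult_left_le_one_le)
  then have "\<lfloor>q * real n\<rfloor> \<le> int n" by linarith
  then show ?thesis by simp
qed

definition Ssel where "Ssel q n x y = (SOME S. S \<in> accommodated_sets q n x y)"

lemma Ssel_acc: "nat \<lfloor>q * real n\<rfloor> \<le> n \<Longrightarrow> Ssel q n x y \<in> accommodated_sets q n x y"
  unfolding Ssel_def using acc_ex by (metis someI_ex)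

lemma SW_Ssel: "social_welfare q n x y = (1 / real n) * (\<Sum>i\<in>Ssel q n x y. 1 - \<bar>x i - y\<bar>)"
  by (simp add: social_welfare_def Ssel_def Let_def)

lemma SW_Min:
  assumes kn: "nat \<lfloor>q * real n\<rfloor> \<le> n"
  shows "social_welfare q n x y = (1 / real n) * (real (nat \<lfloor>q * real n\<rfloor>) -
     Min ((\<lambda>S. \<Sum>i\<in>S. \<bar>x i - y\<bar>) ` {S. S \<subseteq> {..<n} \<and> card S = nat \<lfloor>q * real n\<rfloor>}))"
proof -
  define S where "S = Ssel q n x y"
  have S: "S \<in> accommodated_sets q n x y" unfolding S_def by (rule Ssel_acc[OF kn])
  have Sn: "S \<subseteq> {..<n}" "card S = nat \<lfloor>q * real n\<rfloor>" using S by (auto simp: accommodated_sets_def)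
  have finS: "finite S" using Sn finite_subset by auto
  have fin: "finite {S. S \<subseteq> {..<n} \<and> card S = nat \<lfloor>q * real n\<rfloor>}"
    by (rule finite_subset[of _ "Pow {..<n}"]) auto
  have "Min ((\<lambda>S. \<Sum>i\<in>S. \<bar>x i - y\<bar>) ` {S. S \<subseteq> {..<n} \<and> card S = nat \<lfloor>q * real n\<rfloor>}) = (\<Sum>i\<in>S. \<bar>x i - y\<bar>)"
    by (rule Min_eqI) (use fin Sn acc_opt[OF S] in auto)
  moreover have "(\<Sum>i\<in>S. 1 - \<bar>x i - y\<bar>) = real (nat \<lfloor>q * real n\<rfloor>) - (\<Sum>i\<in>S. \<bar>x i - y\<bar>)"
    using Sn by (simp add: sum_subtractf)
  ultimately show ?thesis by (simp add: SW_Ssel S_def)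
qed

lemma SW_lip1:
  assumes kn: "nat \<lfloor>q * real n\<rfloor> \<le> n"
  shows "social_welfare q n x y' - social_welfare q n x y \<le> \<bar>y - y'\<bar>"
proof (cases "n = 0")
  case True then show ?thesis by (simp add: SW_Ssel)
next
  case False
  define k where "k = nat \<lfloor>q * real n\<rfloor>"
  define S where "S = Ssel q n x y"
  define S' where "S' = Ssel q n x y'"
  have S: "S \<in> accommodated_sets q n x y" unfolding S_def by (rule Ssel_acc[OF kn])
  have S': "S' \<in> accommodated_sets q n x y'" unfolding S'_def by (rule Ssel_acc[OF kn])
  have Sn: "S \<subseteq> {..<n}" "card S = k" using S by (auto simp: accommodated_sets_def k_def)
  have S'n: "S' \<subseteq> {..<n}" "card S' = k" using S' by (auto simp: accommodated_sets_def k_def)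
  have "(\<Sum>i\<in>S. \<bar>x i - y\<bar>) \<le> (\<Sum>i\<in>S'. \<bar>x i - y\<bar>)"
    by (rule acc_opt[OF S]) (use Sn S'n in auto)
  also have "\<dots> \<le> (\<Sum>i\<in>S'. \<bar>x i - y'\<bar> + \<bar>y - y'\<bar>)" by (intro sum_mono) auto
  also have "\<dots> = (\<Sum>i\<in>S'. \<bar>x i - y'\<bar>) + k * \<bar>y - y'\<bar>" using S'n by (simp add: sum.distrib)
  finally have *: "(\<Sum>i\<in>S. \<bar>x i - y\<bar>) - (\<Sum>i\<in>S'. \<bar>x i - y'\<bar>) \<le> k * \<bar>y - y'\<bar>" by simp
  have "social_welfare q n x y' - social_welfare q n x y =
      (1 / real n) * ((\<Sum>i\<in>S. \<bar>x i - y\<bar>) - (\<Sum>i\<in>S'. \<bar>x i - y'\<bar>))"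
    using Sn S'n by (simp add: SW_Ssel S_def[symmetric] S'_def[symmetric] sum_subtractf algebra_simps)
  also have "\<dots> \<le> (1 / real n) * (k * \<bar>y - y'\<bar>)" using * by (intro mult_left_mono) auto
  also have "\<dots> \<le> (1 / real n) * (n * \<bar>y - y'\<bar>)"
    using kn by (intro mult_left_mono mult_right_mono) (auto simp: k_def)
  also have "\<dots> = \<bar>y - y'\<bar>" using False by simp
  finally show ?thesis .
qed

lemma SW_lip:
  assumes kn: "nat \<lfloor>q * real n\<rfloor> \<le> n"
  shows "\<bar>social_welfare q n x y' - social_welfare q n x y\<bar> \<le> \<bar>y - y'\<bar>"
  using SW_lip1[OF kn, of x y' y] SW_lip1[OF kn, of x y y'] by (simp add: abs_minus_commute)


lemma SW_bounds:
  assumes kn: "nat \<lfloor>q * real n\<rfloor> \<le> n" and n: "n > 0"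
    and x01: "\<And>i. i < n \<Longrightarrow> x i \<in> {0..1}" and y: "y \<in> {0..1}" and r: "0 \<le> r" "r \<le> 1"
  shows "\<bar>real n * social_welfare q n x y -
           (real (nat \<lfloor>q * real n\<rfloor>) * (1 - r) + (\<Sum>i<n. max 0 (r - \<bar>x i - y\<bar>)))\<bar>
         \<le> \<bar>real (card {i. i < n \<and> \<bar>x i - y\<bar> \<le> r}) - real (nat \<lfloor>q * real n\<rfloor>)\<bar>"
proof -
  define k where "k = nat \<lfloor>q * real n\<rfloor>"
  define d where "d i = \<bar>x i - y\<bar>" for i
  define T where "T = {i. i < n \<and> d i \<le> r}"
  define S where "S = Ssel q n x y"
  have S: "S \<in> accommodated_sets q n x y" unfolding S_def by (rule Ssel_acc[OF kn])
  have Sn: "S \<subseteq> {..<n}" "card S = k" and cl: "\<forall>i\<in>S. \<forall>j\<in>{..<n} - S. d i \<le> d j"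
    using S by (auto simp: accommodated_sets_def k_def d_def)
  have finS: "finite S" using Sn finite_subset by auto
  have finT: "finite T" "T \<subseteq> {..<n}" unfolding T_def by auto
  have d01: "0 \<le> d i" "d i \<le> 1" if "i < n" for i using x01[OF that] y by (auto simp: d_def)
  have "real n * social_welfare q n x y = (\<Sum>i\<in>S. 1 - d i)"
    using n by (simp add: SW_Ssel S_def d_def)
  also have "\<dots> = (\<Sum>i\<in>S. (1 - r) + (r - d i))" by (rule sum.cong) auto
  also have "\<dots> = (\<Sum>i\<in>S. (1 - r)) + (\<Sum>i\<in>S. r - d i)" by (rule sum.distrib)
  also have "(\<Sum>i\<in>S. (1 - r)) = k * (1 - r)" using Sn by simp
  finally have nSW: "real n * social_welfare q n x y = k * (1 - r) + (\<Sum>i\<in>S. r - d i)" .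
  have Hs: "(\<Sum>i<n. max 0 (r - d i)) = (\<Sum>i\<in>T. r - d i)"
  proof -
    have "(\<Sum>i\<in>T. r - d i) = (\<Sum>i\<in>{i\<in>{..<n}. d i \<le> r}. r - d i)" unfolding T_def by (intro sum.cong) auto
    also have "\<dots> = (\<Sum>i<n. if d i \<le> r then r - d i else 0)" by (rule sum.inter_filter) simp
    also have "\<dots> = (\<Sum>i<n. max 0 (r - d i))" by (intro sum.cong) auto
    finally show ?thesis by simp
  qed
  have up: "(\<Sum>i\<in>S. r - d i) \<le> (\<Sum>i\<in>T. r - d i)"
  proof -
    have "(\<Sum>i\<in>S. r - d i) \<le> (\<Sum>i\<in>S. max 0 (r - d i))" by (intro sum_mono) auto
    also have "\<dots> \<le> (\<Sum>i<n. max 0 (r - d i))" using Sn by (intro sum_mono2) auto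
    finally show ?thesis using Hs by simp
  qed
  have low: "(\<Sum>i\<in>T. r - d i) - \<bar>real (card T) - real k\<bar> \<le> (\<Sum>i\<in>S. r - d i)"
  proof (cases "T \<subseteq> S")
    case True
    have "(\<Sum>i\<in>S. r - d i) = (\<Sum>i\<in>T. r - d i) + (\<Sum>i\<in>S - T. r - d i)"
      using True finS by (simp add: sum.subset_diff)
    moreover have "of_nat (card (S - T)) * (-1) \<le> (\<Sum>i\<in>S - T. r - d i)"
    proof (rule sum_bounded_below)
      fix i assume "i \<in> S - T"
      then have "i < n" using Sn by auto
      then show "-1 \<le> r - d i" using d01[of i] r by simp
    qed
    moreover have "card (S - T) = k - card T" using True finS Sn by (simp add: card_Diff_subset finite_subset)
    moreover have "card T \<le> k" using True finS Sn card_mono by metis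
    ultimately show ?thesis by (simp add: of_nat_diff)
  next
    case False
    then obtain i where i: "i \<in> T" "i \<notin> S" by auto
    have "S \<subseteq> T"
    proof
      fix s assume s: "s \<in> S"
      have "d s \<le> d i" using cl s i finT by auto
      then show "s \<in> T" using i s Sn unfolding T_def by auto
    qed
    have "(\<Sum>i\<in>T. r - d i) = (\<Sum>i\<in>S. r - d i) + (\<Sum>i\<in>T - S. r - d i)"
      using \<open>S \<subseteq> T\<close> finT by (simp add: sum.subset_diff)
    moreover have "(\<Sum>i\<in>T - S. r - d i) \<le> of_nat (card (T - S)) * 1"
    proof (rule sum_bounded_above)
      fix i assume "i \<in> T - S"
      then have "i < n" using finT by auto
      then show "r - d i \<le> 1" using d01[of i] r by simp
    qed
    moreover have "card (T - S) = card T - k" using \<open>S \<subseteq> T\<close> finT Sn by (simp add: card_Diff_subset finite_subset)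
    moreover have "k \<le> card T" using \<open>S \<subseteq> T\<close> finT Sn card_mono by metis
    ultimately show ?thesis by (simp add: of_nat_diff)
  qed
  show ?thesis
    using nSW Hs up low unfolding T_def k_def d_def by (simp add: abs_le_iff)
qed


context tctx begin

abbreviation PM :: "nat \<Rightarrow> (nat \<Rightarrow> real) measure" where "PM n \<equiv> PiM {..<n} (\<lambda>_. Mu)"

lemma meas_Mu: "measurable Mu N = measurable borel N"
  by (rule measurable_cong_sets[OF sets_Mu refl])

lemma gMu: "g \<in> borel_measurable borel \<Longrightarrow> g \<in> borel_measurable Mu"
  by (subst meas_Mu)

lemma prob_PM: "prob_space (PM n)"
  by (rule prob_space_PiM) (rule prob)

lemma indep_coord:
  assumes n: "n > 0"
  shows "prob_space.indep_vars (PM n) (\<lambda>_. Mu) (\<lambda>i \<omega>. \<omega> i) {..<n}"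
proof -
  interpret Q: prob_space "PM n" by (rule prob_PM)
  have ne: "{..<n} \<noteq> {}" using n by auto
  show ?thesis
  proof (subst Q.indep_vars_iff_distr_eq_PiM'[OF ne])
    show "(\<lambda>\<omega>. \<omega> i) \<in> measurable (PM n) Mu" if "i \<in> {..<n}" for i
      using that by (intro measurable_component_singleton) auto
    have "distr (PM n) (PM n) (\<lambda>x. \<lambda>i\<in>{..<n}. x i) = distr (PM n) (PM n) (\<lambda>x. x)"
      by (rule distr_cong) (auto simp: space_PiM PiE_def extensional_def restrict_def fun_eq_iff)
    also have "\<dots> = PM n" by simp
    also have "\<dots> = (\<Pi>\<^sub>M i\<in>{..<n}. distr (PM n) Mu (\<lambda>\<omega>. \<omega> i))"
      by (intro PiM_cong refl distr_PiM_component[symmetric] prob) auto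
    finally show "distr (PM n) (PM n) (\<lambda>x. \<lambda>i\<in>{..<n}. x i) = (\<Pi>\<^sub>M i\<in>{..<n}. distr (PM n) Mu (\<lambda>\<omega>. \<omega> i))" .
  qed
qed

lemma distr_coord_g:
  assumes g[measurable]: "g \<in> borel_measurable borel" and i: "i < n"
  shows "distr (PM n) borel (\<lambda>\<omega>. g (\<omega> i)) = distr Mu borel g"
proof -
  have "distr (PM n) borel (\<lambda>\<omega>. g (\<omega> i)) = distr (distr (PM n) Mu (\<lambda>\<omega>. \<omega> i)) borel g"
    by (subst distr_distr) (auto simp: comp_def intro!: gMu measurable_component_singleton i)
  also have "distr (PM n) Mu (\<lambda>\<omega>. \<omega> i) = Mu" using i by (intro distr_PiM_component prob) auto
  finally show ?thesis .
qed

lemma AE_PM01: "AE \<omega> in PM n. \<forall>i\<in>{..<n}. \<omega> i \<in> {0..1}"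
proof (rule AE_finite_allI)
  fix i assume "i \<in> {..<n}"
  then show "AE \<omega> in PM n. \<omega> i \<in> {0..1}"
    by (intro AE_PiM_component[where P="\<lambda>x. x \<in> {0..1}"] prob AE_01)
qed (rule finite_lessThan)

lemma hoeff:
  assumes g[measurable]: "g \<in> borel_measurable borel" and g01: "\<And>x. x \<in> {0..1} \<Longrightarrow> g x \<in> {0..1}"
    and n: "n > 0" and eps: "\<epsilon> \<ge> 0"
  shows "measure (PM n) {\<omega> \<in> space (PM n). \<bar>(\<Sum>i\<in>{..<n}. g (\<omega> i)) / real n - (\<integral>x. g x \<partial>Mu)\<bar> \<ge> \<epsilon>}
     \<le> 2 * exp (- 2 * real n * \<epsilon>\<^sup>2)"
proof -
  interpret Q: prob_space "PM n" by (rule prob_PM)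
  have i0: "0 \<in> {..<n}" using n by simp
  have gM: "g \<in> borel_measurable Mu" by (rule gMu[OF g])
  have g0M: "(\<lambda>\<omega>. g (\<omega> 0)) \<in> borel_measurable (PM n)"
    by (rule measurable_compose[OF measurable_component_singleton[OF i0] gM])
  have E: "Q.expectation (\<lambda>\<omega>. g (\<omega> 0)) = (\<integral>x. g x \<partial>Mu)"
  proof -
    have "(\<integral>x. x \<partial>distr (PM n) borel (\<lambda>\<omega>. g (\<omega> 0))) = Q.expectation (\<lambda>\<omega>. g (\<omega> 0))"
      by (rule integral_distr[OF g0M]) simp
    moreover have "distr (PM n) borel (\<lambda>\<omega>. g (\<omega> 0)) = distr Mu borel g"
      by (rule distr_coord_g[OF g n])
    moreover have "(\<integral>x. x \<partial>distr Mu borel g) = (\<integral>x. g x \<partial>Mu)"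
      by (rule integral_distr[OF gM]) simp
    ultimately show ?thesis by simp
  qed
  interpret H: Hoeffding_ineq_iid "PM n" "{..<n}" "\<lambda>i \<omega>. g (\<omega> i)" "\<lambda>\<omega>. g (\<omega> 0)" 0 1 "Q.expectation (\<lambda>\<omega>. g (\<omega> 0))"
  proof unfold_locales
    show "Q.indep_vars (\<lambda>_. borel) (\<lambda>i \<omega>. g (\<omega> i)) {..<n}"
      by (rule Q.indep_vars_compose2[OF indep_coord[OF n]]) (rule gM)
    show "distr (PM n) borel (\<lambda>\<omega>. g (\<omega> i)) = distr (PM n) borel (\<lambda>\<omega>. g (\<omega> 0))" if "i \<in> {..<n}" for i
      using distr_coord_g[OF g, of i n] distr_coord_g[OF g n] that by simp
    show "(\<lambda>\<omega>. g (\<omega> 0)) \<in> borel_measurable (PM n)" by (rule g0M)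
    show "AE x in PM n. g (x 0) \<in> {0..1}"
      using AE_PM01[of n] proof (rule eventually_mono)
      fix \<omega> :: "nat \<Rightarrow> real" assume "\<forall>i\<in>{..<n}. \<omega> i \<in> {0..1}"
      then show "g (\<omega> 0) \<in> {0..1}" using i0 g01 by blast
    qed
  qed (rule finite_lessThan, rule reflexive)
  have "measure (PM n) {\<omega> \<in> space (PM n). \<bar>(\<Sum>i\<in>{..<n}. g (\<omega> i)) / real (card {..<n}) - Q.expectation (\<lambda>\<omega>. g (\<omega> 0))\<bar> \<ge> \<epsilon>}
     \<le> 2 * exp (- 2 * real (card {..<n}) * \<epsilon>\<^sup>2 / (1 - 0)\<^sup>2)"
    by (rule H.Hoeffding_ineq_abs_ge'[OF eps]) (use n in auto)
  then show ?thesis unfolding E by simp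
qed


lemma card_sum_ind: "real (card {i. i < (n::nat) \<and> w i \<le> a}) = (\<Sum>i<n. indicator {..a} (w i))"
proof -
  have "(\<Sum>i<n. indicator {..a} (w i) :: real) = (\<Sum>i<n. if w i \<le> a then 1 else 0)"
    by (intro sum.cong) (auto simp: indicator_def)
  also have "\<dots> = (\<Sum>i\<in>{i \<in> {..<n}. w i \<le> a}. 1)" by (rule sum.inter_filter[symmetric]) simp
  also have "{i \<in> {..<n}. w i \<le> a} = {i. i < n \<and> w i \<le> a}" by auto
  finally show ?thesis by simp
qed

lemma Y_meas:
  assumes p: "0 \<le> p" "p \<le> 1"
  shows "percentile_mech p n \<in> borel_measurable (PM n)"
proof (cases "n = 0")
  case True
  have "percentile_mech p n = (\<lambda>w. [] ! nat \<lfloor>- p\<rfloor>)" using True by (simp add: percentile_mech_def fun_eq_iff)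
  then show ?thesis by simp
next
  case False
  then have n: "n > 0" by simp
  show ?thesis
  proof (subst borel_measurable_iff_le, intro allI)
    fix a
    have cm: "(\<lambda>w. \<Sum>i<n. indicator {..a} (w i) :: real) \<in> borel_measurable (PM n)"
    proof (rule borel_measurable_sum)
      fix i assume "i \<in> {..<n}"
      then have "(\<lambda>w. w i) \<in> measurable (PM n) borel"
        using measurable_component_singleton[of i "{..<n}" "\<lambda>_. Mu"] by (simp add: meas_Mu)
      then show "(\<lambda>w. indicator {..a} (w i) :: real) \<in> borel_measurable (PM n)"
        by measurable
    qed
    have "{w \<in> space (PM n). percentile_mech p n w \<le> a} =
        {w \<in> space (PM n). real (nat \<lfloor>p * (real n - 1)\<rfloor>) < (\<Sum>i<n. indicator {..a} (w i))}"
      using percentile_le_iff[OF n p] by (auto simp: card_sum_ind[symmetric])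
    also have "\<dots> \<in> sets (PM n)" using cm by measurable
    finally show "{w \<in> space (PM n). percentile_mech p n w \<le> a} \<in> sets (PM n)" .
  qed
qed

lemma coord_meas: "i < n \<Longrightarrow> (\<lambda>w. w i) \<in> borel_measurable (PM n)"
  using measurable_component_singleton[of i "{..<n}" "\<lambda>_. Mu"] by (simp add: meas_Mu)

lemma Z_meas:
  assumes p: "0 \<le> p" "p \<le> 1"
  shows "(\<lambda>w. social_welfare q n w (percentile_mech p n w)) \<in> borel_measurable (PM n)"
proof -
  define Fam where "Fam = {S. S \<subseteq> {..<n} \<and> card S = nat \<lfloor>q * real n\<rfloor>}"
  have kn: "nat \<lfloor>q * real n\<rfloor> \<le> n" using q0 q1 by (intro k_le_n) auto
  have fin: "finite Fam" unfolding Fam_def by (rule finite_subset[of _ "Pow {..<n}"]) auto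
  have Ym[measurable]: "percentile_mech p n \<in> borel_measurable (PM n)" by (rule Y_meas[OF p])
  have "(\<lambda>w. Min ((\<lambda>S. \<Sum>i\<in>S. \<bar>w i - percentile_mech p n w\<bar>) ` Fam)) \<in> borel_measurable (PM n)"
  proof (rule borel_measurable_Min[OF fin])
    fix S assume S: "S \<in> Fam"
    show "(\<lambda>w. \<Sum>i\<in>S. \<bar>w i - percentile_mech p n w\<bar>) \<in> borel_measurable (PM n)"
    proof (rule borel_measurable_sum)
      fix i assume "i \<in> S"
      then have [measurable]: "(\<lambda>w. w i) \<in> borel_measurable (PM n)" using S by (intro coord_meas) (auto simp: Fam_def)
      show "(\<lambda>w. \<bar>w i - percentile_mech p n w\<bar>) \<in> borel_measurable (PM n)" by measurable
    qed
  qed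
  then have "(\<lambda>w. (1 / real n) * (real (nat \<lfloor>q * real n\<rfloor>) - Min ((\<lambda>S. \<Sum>i\<in>S. \<bar>w i - percentile_mech p n w\<bar>) ` Fam))) \<in> borel_measurable (PM n)"
    by measurable
  also have "(\<lambda>w. (1 / real n) * (real (nat \<lfloor>q * real n\<rfloor>) - Min ((\<lambda>S. \<Sum>i\<in>S. \<bar>w i - percentile_mech p n w\<bar>) ` Fam))) =
      (\<lambda>w. social_welfare q n w (percentile_mech p n w))"
    by (rule ext) (simp add: SW_Min[OF kn] Fam_def)
  finally show ?thesis .
qed

lemma SW_01:
  assumes x01: "\<And>i. i < n \<Longrightarrow> x i \<in> {0..1}" and y: "y \<in> {0..1}"
  shows "0 \<le> social_welfare q n x y" "social_welfare q n x y \<le> 1"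
proof -
  have kn: "nat \<lfloor>q * real n\<rfloor> \<le> n" using q0 q1 by (intro k_le_n) auto
  define S where "S = Ssel q n x y"
  have S: "S \<subseteq> {..<n}" "card S = nat \<lfloor>q * real n\<rfloor>"
    using Ssel_acc[OF kn, of x y] by (auto simp: S_def accommodated_sets_def)
  have fS: "finite S" using S finite_subset by auto
  have t01: "0 \<le> 1 - \<bar>x i - y\<bar>" "1 - \<bar>x i - y\<bar> \<le> 1" if "i \<in> S" for i
  proof -
    have "i < n" using S that by auto
    then show "0 \<le> 1 - \<bar>x i - y\<bar>" "1 - \<bar>x i - y\<bar> \<le> 1" using x01[of i] y by auto
  qed
  have s0: "0 \<le> (\<Sum>i\<in>S. 1 - \<bar>x i - y\<bar>)" using t01 by (intro sum_nonneg) auto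
  have "(\<Sum>i\<in>S. 1 - \<bar>x i - y\<bar>) \<le> of_nat (card S) * 1" using t01 by (intro sum_bounded_above) auto
  then have s1: "(\<Sum>i\<in>S. 1 - \<bar>x i - y\<bar>) \<le> real n" using S kn by simp
  show "0 \<le> social_welfare q n x y" using s0 by (simp add: SW_Ssel S_def[symmetric])
  show "social_welfare q n x y \<le> 1"
  proof (cases "n = 0")
    case True then show ?thesis by (simp add: SW_Ssel)
  next
    case False
    then show ?thesis using s1 by (simp add: SW_Ssel S_def[symmetric] field_simps)
  qed
qed

end

context tctx begin

definition "hfun t x = max 0 (rad t - \<bar>x - t\<bar>)"

lemma hfun_meas[measurable]: "hfun t \<in> borel_measurable borel"
  unfolding hfun_def by measurable

lemma h01: "t \<in> {0..1} \<Longrightarrow> hfun t x \<in> {0..1}"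
  using rad_props[of t] by (auto simp: hfun_def)

lemma int_h: "t \<in> {0..1} \<Longrightarrow> (\<integral>x. hfun t x \<partial>Mu) = rad t * q - W t"
proof -
  assume t: "t \<in> {0..1}"
  have "(\<lambda>x. hfun t x) = (\<lambda>x. rad t * indicator (Bl t) x - indicator (Bl t) x * \<bar>x - t\<bar>)"
    by (rule ext) (auto simp: hfun_def Bl_def indicator_def)
  then have "(\<integral>x. hfun t x \<partial>Mu) = (\<integral>x. rad t * indicator (Bl t) x - indicator (Bl t) x * \<bar>x - t\<bar> \<partial>Mu)"
    by simp
  also have "\<dots> = rad t * measure Mu (Bl t) - Phi (Bl t) t"
    using int_ind[of "Bl t"] int_ind_abs[of "Bl t" t]
    by (simp add: Bochner_Integration.integral_diff Phi_def)
  also have "\<dots> = rad t * q - W t" using measure_Bl[OF t] by (simp add: W_eq)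
  finally show ?thesis .
qed

lemma int_g: "t \<in> {0..1} \<Longrightarrow> (\<integral>x. indicator (Bl t) x \<partial>Mu) = q"
  using measure_Bl by simp

lemma card_sum_if: "real (card {i. i < (n::nat) \<and> P i}) = (\<Sum>i<n. if P i then 1 else 0)"
proof -
  have "(\<Sum>i<n. if P i then 1 else 0 :: real) = (\<Sum>i\<in>{i \<in> {..<n}. P i}. 1)" by (rule sum.inter_filter[symmetric]) simp
  also have "{i \<in> {..<n}. P i} = {i. i < n \<and> P i}" by auto
  finally show ?thesis by simp
qed

lemma kn_bound: "n > 0 \<Longrightarrow> \<bar>real (nat \<lfloor>q * real n\<rfloor>) / real n - q\<bar> \<le> 1 / real n"
proof -
  assume n: "n > 0"
  have qn: "0 \<le> q * real n" using q0 by simp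
  have a: "real (nat \<lfloor>q * real n\<rfloor>) \<le> q * real n" using qn by linarith
  have b: "q * real n - 1 < real (nat \<lfloor>q * real n\<rfloor>)" using qn by linarith
  have "\<bar>real (nat \<lfloor>q * real n\<rfloor>) - q * real n\<bar> \<le> 1" using a b by linarith
  then have "\<bar>real (nat \<lfloor>q * real n\<rfloor>) - q * real n\<bar> / real n \<le> 1 / real n" using n by (simp add: divide_right_mono)
  also have "\<bar>real (nat \<lfloor>q * real n\<rfloor>) - q * real n\<bar> / real n = \<bar>real (nat \<lfloor>q * real n\<rfloor>) / real n - q\<bar>"
    using n by (simp add: field_simps)
  finally show ?thesis .
qed

lemma good_grid:
  assumes n: "n > 0" and x01: "\<And>i. i < n \<Longrightarrow> x i \<in> {0..1}" and t: "t \<in> {0..1}"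
    and hH: "\<bar>(\<Sum>i<n. hfun t (x i)) / real n - (rad t * q - W t)\<bar> < e0"
    and hG: "\<bar>(\<Sum>i<n. indicator (Bl t) (x i)) / real n - q\<bar> < e0"
  shows "\<bar>social_welfare q n x t - (q - W t)\<bar> \<le> 2 * e0 + 2 / real n"
proof -
  have kn: "nat \<lfloor>q * real n\<rfloor> \<le> n" using q0 q1 by (intro k_le_n) auto
  define r where "r = rad t"
  have r: "0 \<le> r" "r \<le> 1" using rad_props[OF t] by (auto simp: r_def)
  define k where "k = real (nat \<lfloor>q * real n\<rfloor>)"
  define H where "H = (\<Sum>i<n. hfun t (x i))"
  define G where "G = (\<Sum>i<n. indicator (Bl t) (x i) :: real)"
  have cardT: "real (card {i. i < n \<and> \<bar>x i - t\<bar> \<le> r}) = G"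
    unfolding G_def card_sum_if by (intro sum.cong) (auto simp: indicator_def Bl_def r_def)
  have Hdef: "H = (\<Sum>i<n. max 0 (r - \<bar>x i - t\<bar>))" unfolding H_def hfun_def r_def ..
  have B: "\<bar>real n * social_welfare q n x t - (k * (1 - r) + H)\<bar> \<le> \<bar>G - k\<bar>"
    using SW_bounds[of q n x t r, OF kn n x01 t r(1) r(2)] unfolding Hdef cardT k_def by simp
  have nn: "real n > 0" using n by simp
  have B': "\<bar>social_welfare q n x t - (k / n * (1 - r) + H / n)\<bar> \<le> \<bar>G / n - k / n\<bar>"
  proof -
    have "\<bar>social_welfare q n x t - (k / n * (1 - r) + H / n)\<bar> = \<bar>real n * social_welfare q n x t - (k * (1 - r) + H)\<bar> / n"
      using nn by (simp add: field_simps abs_divide[symmetric] abs_mult)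
    also have "\<dots> \<le> \<bar>G - k\<bar> / n" using B nn by (simp add: divide_right_mono)
    also have "\<dots> = \<bar>G / n - k / n\<bar>" using nn by (simp add: field_simps abs_divide[symmetric])
    finally show ?thesis .
  qed
  have kb: "\<bar>k / n - q\<bar> \<le> 1 / n" unfolding k_def by (rule kn_bound[OF n])
  have hH': "\<bar>H / n - (r * q - W t)\<bar> < e0" using hH unfolding H_def r_def .
  have hG': "\<bar>G / n - q\<bar> < e0" using hG unfolding G_def .
  have "\<bar>(k / n - q) * (1 - r)\<bar> \<le> \<bar>k / n - q\<bar>" using r by (simp add: abs_mult mult_right_le_one_le)
  have eq: "social_welfare q n x t - (q - W t) =
      (social_welfare q n x t - (k / n * (1 - r) + H / n)) + (k / n - q) * (1 - r) + (H / n - (r * q - W t))"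
    by (simp add: algebra_simps)
  have "\<bar>social_welfare q n x t - (q - W t)\<bar> \<le>
      \<bar>social_welfare q n x t - (k / n * (1 - r) + H / n)\<bar> + \<bar>(k / n - q) * (1 - r)\<bar> + \<bar>H / n - (r * q - W t)\<bar>"
    unfolding eq by (rule order_trans[OF abs_triangle_ineq add_right_mono[OF abs_triangle_ineq]])
  also have "\<dots> \<le> \<bar>G / n - k / n\<bar> + \<bar>k / n - q\<bar> + e0"
    using B' \<open>\<bar>(k / n - q) * (1 - r)\<bar> \<le> \<bar>k / n - q\<bar>\<close> hH' by linarith
  also have "\<dots> \<le> (\<bar>G / n - q\<bar> + \<bar>k / n - q\<bar>) + \<bar>k / n - q\<bar> + e0" by linarith
  also have "\<dots> \<le> 2 * e0 + 2 / real n" using hG' kb by linarith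
  finally show ?thesis .
qed

lemma unif_grid:
  assumes N: "N > 0" and D: "\<And>m. m \<le> N \<Longrightarrow> \<bar>social_welfare q n x (real m / real N) - (q - W (real m / real N))\<bar> \<le> D"
    and y: "y \<in> {0..1}"
  shows "\<bar>social_welfare q n x y - (q - W y)\<bar> \<le> D + 2 / real N"
proof -
  have kn: "nat \<lfloor>q * real n\<rfloor> \<le> n" using q0 q1 by (intro k_le_n) auto
  define m where "m = nat \<lfloor>y * real N\<rfloor>"
  have yN: "0 \<le> y * real N" using y by simp
  have m1: "real m \<le> y * real N" using yN unfolding m_def by linarith
  have m2: "y * real N < real m + 1" using yN unfolding m_def by linarith
  have mN: "m \<le> N"
  proof -
    have "y * real N \<le> real N" using y by (simp add: mult_left_le_one_le)
    then have "real m \<le> real N" using m1 by linarith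
    then show ?thesis by simp
  qed
  define t where "t = real m / real N"
  have Np: "real N > 0" using N by simp
  have t: "t \<in> {0..1}" using mN Np by (auto simp: t_def field_simps)
  have ty: "\<bar>y - t\<bar> \<le> 1 / real N"
  proof -
    have "t \<le> y" using m1 Np by (simp add: t_def field_simps)
    moreover have "y - t < 1 / real N"
    proof -
      have "y - t = (y * real N - real m) / real N" using Np by (simp add: t_def field_simps)
      also have "\<dots> < 1 / real N" using m2 Np by (intro divide_strict_right_mono) auto
      finally show ?thesis .
    qed
    ultimately show ?thesis by simp
  qed
  have "\<bar>social_welfare q n x y - social_welfare q n x t\<bar> \<le> \<bar>t - y\<bar>" by (rule SW_lip[OF kn])
  moreover have "\<bar>W y - W t\<bar> \<le> q * \<bar>y - t\<bar>" by (rule W_lip[OF t y])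
  moreover have "q * \<bar>y - t\<bar> \<le> \<bar>y - t\<bar>" using q1 by (simp add: mult_left_le_one_le q0 less_imp_le)
  moreover have "\<bar>social_welfare q n x t - (q - W t)\<bar> \<le> D" using D[OF mN] by (simp add: t_def)
  ultimately show ?thesis using ty by (simp add: abs_minus_commute)
qed


lemma ev_meas:
  assumes g[measurable]: "g \<in> borel_measurable borel"
  shows "{\<omega> \<in> space (PM n). c \<le> \<bar>(\<Sum>i<n. g (\<omega> i)) / real n - d\<bar>} \<in> sets (PM n)"
proof -
  have "(\<lambda>\<omega>. \<Sum>i<n. g (\<omega> i)) \<in> borel_measurable (PM n)"
  proof (rule borel_measurable_sum)
    fix i assume "i \<in> {..<n}"
    then have [measurable]: "(\<lambda>w. w i) \<in> borel_measurable (PM n)" by (intro coord_meas) auto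
    show "(\<lambda>\<omega>. g (\<omega> i)) \<in> borel_measurable (PM n)" by measurable
  qed
  then show ?thesis by measurable
qed

lemma quant_low:
  assumes n: "n > 0" and p: "0 \<le> p" "p \<le> 1" and Fs: "F s < p"
    and nl: "1 \<le> real n * ((p - F s) / 2)"
    and good: "\<bar>(\<Sum>i<n. indicator {..s} (x i)) / real n - F s\<bar> < (p - F s) / 2"
  shows "s < percentile_mech p n x"
proof (rule ccontr)
  assume "\<not> s < percentile_mech p n x"
  then have "percentile_mech p n x \<le> s" by simp
  then have j: "nat \<lfloor>p * (real n - 1)\<rfloor> < card {i. i < n \<and> x i \<le> s}"
    using percentile_le_iff[OF n p] by simp
  define C where "C = real (card {i. i < n \<and> x i \<le> s})"
  have C: "C = (\<Sum>i<n. indicator {..s} (x i))" unfolding C_def by (rule card_sum_ind)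
  have "p * (real n - 1) < real (nat \<lfloor>p * (real n - 1)\<rfloor>) + 1" by linarith
  also have "\<dots> \<le> C" using j unfolding C_def by linarith
  finally have "p * real n - p < C" by (simp add: algebra_simps)
  then have "p * real n - 1 < C" using p by linarith
  then have "(p * real n - 1) / real n < C / real n" using n by (intro divide_strict_right_mono) auto
  moreover have "(p * real n - 1) / real n = p - 1 / real n" using n by (simp add: field_simps)
  ultimately have "p - 1 / real n < C / real n" by simp
  moreover have "1 / real n \<le> (p - F s) / 2" using nl n by (simp add: field_simps)
  moreover have "p - (p - F s) / 2 - F s = (p - F s) / 2" by (simp add: field_simps)
  ultimately have "(p - F s) / 2 < C / real n - F s" by linarith
  moreover have "C / real n - F s \<le> \<bar>C / real n - F s\<bar>" by simp
  moreover have "\<bar>C / real n - F s\<bar> < (p - F s) / 2" using good unfolding C[symmetric] .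
  ultimately show False by linarith
qed

lemma quant_high:
  assumes n: "n > 0" and p: "0 \<le> p" "p \<le> 1" and Fs: "p < F s"
    and good: "\<bar>(\<Sum>i<n. indicator {..s} (x i)) / real n - F s\<bar> < (F s - p) / 2"
  shows "percentile_mech p n x \<le> s"
proof (rule ccontr)
  assume "\<not> percentile_mech p n x \<le> s"
  then have j: "\<not> nat \<lfloor>p * (real n - 1)\<rfloor> < card {i. i < n \<and> x i \<le> s}"
    using percentile_le_iff[OF n p] by simp
  define C where "C = real (card {i. i < n \<and> x i \<le> s})"
  have C: "C = (\<Sum>i<n. indicator {..s} (x i))" unfolding C_def by (rule card_sum_ind)
  have "C \<le> real (nat \<lfloor>p * (real n - 1)\<rfloor>)" using j unfolding C_def by simp
  also have "\<dots> \<le> p * (real n - 1)" using p n by (simp add: of_nat_nat)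
  also have "\<dots> \<le> p * real n" using p by (simp add: algebra_simps)
  finally have "C / real n \<le> p" using n by (simp add: field_simps)
  moreover have "(F s - p) / 2 < F s - p" using Fs by simp
  ultimately have "(F s - p) / 2 < F s - C / real n" by linarith
  moreover have "F s - C / real n \<le> \<bar>C / real n - F s\<bar>" by simp
  moreover have "\<bar>C / real n - F s\<bar> < (F s - p) / 2" using good unfolding C[symmetric] .
  ultimately show False by linarith
qed

end

context tctx begin

lemma F01: "0 \<le> F t" "F t \<le> 1"
  by (simp_all add: F_def')

lemma interval_I:
  assumes yb: "ybar \<in> {0..1}" and mn: "\<forall>z\<in>{0..1}. W ybar \<le> W z"
  obtains a b where "0 \<le> a" "a \<le> ybar" "ybar \<le> b" "b \<le> 1"
    "\<And>t. a \<le> t \<Longrightarrow> t \<le> b \<Longrightarrow> W t = W ybar"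
    "\<And>s. 0 \<le> s \<Longrightarrow> s < a \<Longrightarrow> F s < F ybar"
    "\<And>s. b < s \<Longrightarrow> s \<le> 1 \<Longrightarrow> F ybar < F s"
proof -
  define p where "p = F ybar"
  define I where "I = {t \<in> {0..1}. F t = p}"
  have cl: "closed I" unfolding I_def by (intro continuous_closed_preimage_constant F_cont) auto
  have yI: "ybar \<in> I" using yb by (simp add: I_def p_def)
  have bdd: "bdd_below I" "bdd_above I" unfolding I_def by (auto intro: bdd_belowI[of _ 0] bdd_aboveI[of _ 1])
  define a where "a = Inf I"
  define b where "b = Sup I"
  have aI: "a \<in> I" unfolding a_def using yI bdd cl by (intro closed_contains_Inf) auto
  have bI: "b \<in> I" unfolding b_def using yI bdd cl by (intro closed_contains_Sup) auto
  have ay: "a \<le> ybar" unfolding a_def using yI bdd by (intro cInf_lower) auto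
  have yb': "ybar \<le> b" unfolding b_def using yI bdd by (intro cSup_upper) auto
  have a0: "0 \<le> a" and b1: "b \<le> 1" using aI bI by (auto simp: I_def)
  have Fa: "F a = p" and Fb: "F b = p" using aI bI by (auto simp: I_def)
  show ?thesis
  proof (rule that[OF a0 ay yb' b1])
    fix t assume t: "a \<le> t" "t \<le> b"
    have "F t = p" using F_mono[OF t(1)] F_mono[OF t(2)] Fa Fb by simp
    then show "W t = W ybar" using t a0 b1 by (intro W_const[OF yb mn]) (auto simp: p_def)
  next
    fix s assume s: "0 \<le> s" "s < a"
    have le: "F s \<le> p" using F_mono[of s a] s Fa by simp
    have "F s \<noteq> p"
    proof
      assume "F s = p"
      then have "s \<in> I" using s b1 ay yb by (auto simp: I_def)
      then have "a \<le> s" unfolding a_def using bdd by (intro cInf_lower) auto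
      then show False using s by simp
    qed
    then show "F s < F ybar" using le by (simp add: p_def)
  next
    fix s assume s: "b < s" "s \<le> 1"
    have le: "p \<le> F s" using F_mono[of b s] s Fb by simp
    have "F s \<noteq> p"
    proof
      assume "F s = p"
      then have "s \<in> I" using s a0 ay yb' by (auto simp: I_def)
      then have "s \<le> b" unfolding b_def using bdd by (intro cSup_upper) auto
      then show False using s by simp
    qed
    then show "F ybar < F s" using le by (simp add: p_def)
  qed
qed

lemma good_point:
  assumes yb: "ybar \<in> {0..1}" and mn: "\<forall>z\<in>{0..1}. W ybar \<le> W z"
    and ab: "0 \<le> a" "a \<le> b" "b \<le> 1"
    and IW: "\<And>t. a \<le> t \<Longrightarrow> t \<le> b \<Longrightarrow> W t = W ybar"
    and n: "n > 0" and N: "N > 0" and e0: "e0 > 0" and Ne: "1 / real N \<le> e0" and ne: "1 / real n \<le> e0"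
    and x01: "\<And>i. i < n \<Longrightarrow> x i \<in> {0..1}"
    and hgrid: "\<And>m. m \<le> N \<Longrightarrow>
       \<bar>(\<Sum>i<n. hfun (real m / real N) (x i)) / real n - (rad (real m / real N) * q - W (real m / real N))\<bar> < e0 \<and>
       \<bar>(\<Sum>i<n. indicator (Bl (real m / real N)) (x i)) / real n - q\<bar> < e0"
    and Ylow: "a - e0 \<le> percentile_mech (F ybar) n x"
    and Yhigh: "percentile_mech (F ybar) n x \<le> b + e0"
  shows "\<bar>social_welfare q n x (percentile_mech (F ybar) n x) - (q - W ybar)\<bar> \<le> 7 * e0"
proof -
  define Y where "Y = percentile_mech (F ybar) n x"
  have Y01: "Y \<in> {0..1}"
  proof -
    have "nat \<lfloor>F ybar * (real n - 1)\<rfloor> < n"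
    proof -
      have "F ybar * (real n - 1) \<le> real n - 1" using F01[of ybar] n by (intro mult_left_le_one_le) auto
      then have "real_of_int \<lfloor>F ybar * (real n - 1)\<rfloor> < real n"
        using of_int_floor_le[of "F ybar * (real n - 1)"] by linarith
      then have "\<lfloor>F ybar * (real n - 1)\<rfloor> < int n" by linarith
      then show ?thesis using n by (cases "\<lfloor>F ybar * (real n - 1)\<rfloor> < 0") (auto simp: nat_less_iff)
    qed
    then have "Y \<in> x ` {..<n}" unfolding Y_def percentile_mech_def by (rule sort_mem)
    then show ?thesis using x01 by auto
  qed
  have grid: "\<bar>social_welfare q n x (real m / real N) - (q - W (real m / real N))\<bar> \<le> 2 * e0 + 2 / real n"
    if m: "m \<le> N" for m
  proof (rule good_grid[OF n x01])
    show "real m / real N \<in> {0..1}" using m N by (auto simp: field_simps)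
  qed (use hgrid[OF m] in auto)
  have unif: "\<bar>social_welfare q n x y - (q - W y)\<bar> \<le> (2 * e0 + 2 / real n) + 2 / real N" if y: "y \<in> {0..1}" for y
    by (rule unif_grid[OF N grid y])
  define t0 where "t0 = max a (min b Y)"
  have t0: "a \<le> t0" "t0 \<le> b" using ab by (auto simp: t0_def)
  have t01: "t0 \<in> {0..1}" using t0 ab by auto
  have Yt0: "\<bar>Y - t0\<bar> \<le> e0"
  proof -
    have "a - e0 \<le> Y" "Y \<le> b + e0" using Ylow Yhigh unfolding Y_def by auto
    then show ?thesis using ab e0 unfolding t0_def by (simp add: abs_le_iff max_def min_def)
  qed
  have "\<bar>W Y - W t0\<bar> \<le> q * \<bar>Y - t0\<bar>" by (rule W_lip[OF t01 Y01])
  also have "\<dots> \<le> 1 * e0" using q0 q1 Yt0 by (intro mult_mono) auto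
  finally have WY: "\<bar>W Y - W ybar\<bar> \<le> e0" using IW[OF t0] by simp
  have "\<bar>social_welfare q n x Y - (q - W ybar)\<bar> \<le> \<bar>social_welfare q n x Y - (q - W Y)\<bar> + \<bar>W Y - W ybar\<bar>"
    by linarith
  also have "\<dots> \<le> (2 * e0 + 2 / real n) + 2 / real N + e0" using unif[OF Y01] WY by linarith
  also have "\<dots> \<le> 7 * e0"
  proof -
    have "2 / real n \<le> 2 * e0" "2 / real N \<le> 2 * e0"
      using mult_left_mono[OF ne, of 2] mult_left_mono[OF Ne, of 2] by simp_all
    then show ?thesis by linarith
  qed
  finally show ?thesis unfolding Y_def .
qed


lemma Y01:
  assumes n: "n > 0" and p: "0 \<le> p" "p \<le> 1" and x01: "\<And>i. i < n \<Longrightarrow> x i \<in> {0..1}"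
  shows "percentile_mech p n x \<in> {0..1}"
proof -
  have "nat \<lfloor>p * (real n - 1)\<rfloor> < n"
  proof -
    have "p * (real n - 1) \<le> real n - 1" using p n by (intro mult_left_le_one_le) auto
    then have "real_of_int \<lfloor>p * (real n - 1)\<rfloor> < real n"
      using of_int_floor_le[of "p * (real n - 1)"] by linarith
    then have "\<lfloor>p * (real n - 1)\<rfloor> < int n" by linarith
    then show ?thesis using n by (cases "\<lfloor>p * (real n - 1)\<rfloor> < 0") (auto simp: nat_less_iff)
  qed
  then have "percentile_mech p n x \<in> x ` {..<n}" unfolding percentile_mech_def by (rule sort_mem)
  then show ?thesis using x01 by auto
qed

lemma exp_mono_eta: "0 < \<eta> \<Longrightarrow> \<eta> \<le> x \<Longrightarrow> exp (- 2 * real n * x\<^sup>2) \<le> exp (- 2 * real n * \<eta>\<^sup>2)"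
proof -
  assume h: "0 < \<eta>" "\<eta> \<le> x"
  then have "\<eta>\<^sup>2 \<le> x\<^sup>2" by (intro power_mono) auto
  then have "2 * real n * \<eta>\<^sup>2 \<le> 2 * real n * x\<^sup>2" by (intro mult_left_mono) auto
  then show ?thesis by simp
qed

lemma int_ind_le: "(\<integral>x. indicator {..s} x \<partial>Mu) = F s"
  by (simp add: F_def')


lemma fixed_n:
  assumes yb: "ybar \<in> {0..1}" and mn: "\<forall>z\<in>{0..1}. W ybar \<le> W z"
    and ab: "0 \<le> a" "a \<le> b" "b \<le> 1"
    and IW: "\<And>t. a \<le> t \<Longrightarrow> t \<le> b \<Longrightarrow> W t = W ybar"
    and Fa: "\<And>s. 0 \<le> s \<Longrightarrow> s < a \<Longrightarrow> F s < F ybar"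
    and Fb: "\<And>s. b < s \<Longrightarrow> s \<le> 1 \<Longrightarrow> F ybar < F s"
    and e0: "e0 > 0" and N: "N > 0" "1 / real N \<le> e0"
    and n: "n > 0"
    and eta: "0 < \<eta>" "\<eta> \<le> e0" "\<eta> \<le> \<eta>1" "\<eta> \<le> \<eta>2" "1 \<le> real n * \<eta>"
    and eta1: "\<eta>1 = (if 0 \<le> a - e0 then (F ybar - F (a - e0)) / 2 else 1)"
    and eta2: "\<eta>2 = (if b + e0 \<le> 1 then (F (b + e0) - F ybar) / 2 else 1)"
  shows "\<bar>expected_SW_PM Mu q (F ybar) n - (q - W ybar)\<bar>
     \<le> 7 * e0 + (1 + \<bar>q - W ybar\<bar>) * (4 * real (N + 1) + 4) * exp (- 2 * real n * \<eta>\<^sup>2)"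
proof -
  define p where "p = F ybar"
  have p: "0 \<le> p" "p \<le> 1" using F01 by (auto simp: p_def)
  define c where "c = q - W ybar"
  define C where "C = 1 + \<bar>c\<bar>"
  interpret Q: prob_space "PM n" by (rule prob_PM)
  define g where "g m = real m / real N" for m :: nat
  define EH where "EH m = {\<omega> \<in> space (PM n). e0 \<le> \<bar>(\<Sum>i<n. hfun (g m) (\<omega> i)) / real n - (\<integral>x. hfun (g m) x \<partial>Mu)\<bar>}" for m
  define EG where "EG m = {\<omega> \<in> space (PM n). e0 \<le> \<bar>(\<Sum>i<n. indicator (Bl (g m)) (\<omega> i)) / real n - (\<integral>x. indicator (Bl (g m)) x \<partial>Mu)\<bar>}" for m
  define s1 where "s1 = a - e0"
  define s2 where "s2 = b + e0"
  define E1 where "E1 = {\<omega> \<in> space (PM n). \<eta>1 \<le> \<bar>(\<Sum>i<n. indicator {..s1} (\<omega> i)) / real n - (\<integral>x. indicator {..s1} x \<partial>Mu)\<bar>}"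
  define E2 where "E2 = {\<omega> \<in> space (PM n). \<eta>2 \<le> \<bar>(\<Sum>i<n. indicator {..s2} (\<omega> i)) / real n - (\<integral>x. indicator {..s2} x \<partial>Mu)\<bar>}"
  define Bad where "Bad = (\<Union>m\<in>{..N}. EH m \<union> EG m) \<union> E1 \<union> E2"
  define ex where "ex = exp (- 2 * real n * \<eta>\<^sup>2)"
  have g01: "g m \<in> {0..1}" if "m \<le> N" for m using that N by (auto simp: g_def field_simps)
  have mEH: "EH m \<in> sets (PM n)" for m unfolding EH_def by (rule ev_meas) simp
  have mEG: "EG m \<in> sets (PM n)" for m unfolding EG_def by (rule ev_meas) simp
  have mE1: "E1 \<in> sets (PM n)" unfolding E1_def by (rule ev_meas) simp
  have mE2: "E2 \<in> sets (PM n)" unfolding E2_def by (rule ev_meas) simp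
  have mBad: "Bad \<in> sets (PM n)" unfolding Bad_def using mEH mEG mE1 mE2 by auto
  have pEH: "measure (PM n) (EH m) \<le> 2 * ex" if m: "m \<le> N" for m
  proof -
    have "measure (PM n) (EH m) \<le> 2 * exp (- 2 * real n * e0\<^sup>2)"
      unfolding EH_def using e0 by (intro hoeff[OF hfun_meas h01[OF g01[OF m]] n]) auto
    also have "\<dots> \<le> 2 * ex" unfolding ex_def using exp_mono_eta[OF eta(1,2)] by simp
    finally show ?thesis .
  qed
  have pEG: "measure (PM n) (EG m) \<le> 2 * ex" for m
  proof -
    have "measure (PM n) (EG m) \<le> 2 * exp (- 2 * real n * e0\<^sup>2)"
      unfolding EG_def using e0 by (intro hoeff[OF _ _ n]) (auto simp: indicator_def)
    also have "\<dots> \<le> 2 * ex" unfolding ex_def using exp_mono_eta[OF eta(1,2)] by simp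
    finally show ?thesis .
  qed
  have eta12: "0 < \<eta>1" "0 < \<eta>2"
    using Fa[of "a - e0"] Fb[of "b + e0"] e0 by (auto simp: eta1 eta2)
  have pE1: "measure (PM n) E1 \<le> 2 * ex"
  proof -
    have "measure (PM n) E1 \<le> 2 * exp (- 2 * real n * \<eta>1\<^sup>2)"
      unfolding E1_def using eta12 by (intro hoeff[OF _ _ n]) (auto simp: indicator_def)
    also have "\<dots> \<le> 2 * ex" unfolding ex_def using exp_mono_eta[OF eta(1,3)] by simp
    finally show ?thesis .
  qed
  have pE2: "measure (PM n) E2 \<le> 2 * ex"
  proof -
    have "measure (PM n) E2 \<le> 2 * exp (- 2 * real n * \<eta>2\<^sup>2)"
      unfolding E2_def using eta12 by (intro hoeff[OF _ _ n]) (auto simp: indicator_def)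
    also have "\<dots> \<le> 2 * ex" unfolding ex_def using exp_mono_eta[OF eta(1,4)] by simp
    finally show ?thesis .
  qed
  have pBad: "measure (PM n) Bad \<le> (4 * real (N + 1) + 4) * ex"
  proof -
    have "measure (PM n) Bad \<le> measure (PM n) ((\<Union>m\<in>{..N}. EH m \<union> EG m) \<union> E1) + measure (PM n) E2"
      unfolding Bad_def using mEH mEG mE1 mE2 by (intro measure_Un_le) auto
    also have "measure (PM n) ((\<Union>m\<in>{..N}. EH m \<union> EG m) \<union> E1) \<le> measure (PM n) (\<Union>m\<in>{..N}. EH m \<union> EG m) + measure (PM n) E1"
      using mEH mEG mE1 by (intro measure_Un_le) auto
    also have "measure (PM n) (\<Union>m\<in>{..N}. EH m \<union> EG m) \<le> (\<Sum>m\<in>{..N}. measure (PM n) (EH m \<union> EG m))"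
      using mEH mEG by (intro Q.finite_measure_subadditive_finite) auto
    also have "\<dots> \<le> (\<Sum>m\<in>{..N}. 4 * ex)"
    proof (rule sum_mono)
      fix m assume m: "m \<in> {..N}"
      have "measure (PM n) (EH m \<union> EG m) \<le> measure (PM n) (EH m) + measure (PM n) (EG m)"
        using mEH mEG by (intro measure_Un_le) auto
      also have "\<dots> \<le> 2 * ex + 2 * ex" using pEH[of m] pEG[of m] m by (intro add_mono) auto
      finally show "measure (PM n) (EH m \<union> EG m) \<le> 4 * ex" by simp
    qed
    also have "(\<Sum>m\<in>{..N}. 4 * ex) = 4 * real (N + 1) * ex" by simp
    finally show ?thesis using pE1 pE2 by (simp add: algebra_simps)
  qed
  define Z where "Z \<omega> = social_welfare q n \<omega> (percentile_mech p n \<omega>)" for \<omega>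
  have Zm: "Z \<in> borel_measurable (PM n)" unfolding Z_def using Z_meas[OF p] by simp
  have AEb: "AE \<omega> in PM n. \<omega> \<in> space (PM n) \<and> (\<forall>i\<in>{..<n}. \<omega> i \<in> {0..1})"
    using AE_PM01[of n] by (auto simp: AE_space)
  have Z01: "0 \<le> Z \<omega> \<and> Z \<omega> \<le> 1" if x01: "\<And>i. i < n \<Longrightarrow> \<omega> i \<in> {0..1}" for \<omega>
    using SW_01[of n \<omega>, OF x01 Y01[of n p \<omega>, OF n p x01]] unfolding Z_def by auto
  have intZ: "integrable (PM n) Z"
  proof (rule Q.integrable_const_bound[of _ 1])
    show "AE x in PM n. norm (Z x) \<le> 1" using AEb by (rule eventually_mono) (use Z01 in auto)
  qed (rule Zm)
  have AEpt: "AE \<omega> in PM n. \<bar>Z \<omega> - c\<bar> \<le> 7 * e0 + C * indicator Bad \<omega>"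
    using AEb
  proof (rule eventually_mono)
    fix \<omega> :: "nat \<Rightarrow> real" assume "\<omega> \<in> space (PM n) \<and> (\<forall>i\<in>{..<n}. \<omega> i \<in> {0..1})"
    then have sp: "\<omega> \<in> space (PM n)" and x01: "\<And>i. i < n \<Longrightarrow> \<omega> i \<in> {0..1}" by auto
    show "\<bar>Z \<omega> - c\<bar> \<le> 7 * e0 + C * indicator Bad \<omega>"
    proof (cases "\<omega> \<in> Bad")
      case True
      have "\<bar>Z \<omega> - c\<bar> \<le> C" using Z01[of \<omega>, OF x01] unfolding C_def by linarith
      then show ?thesis using True e0 by simp
    next
      case False
      have Yg: "Y \<in> {0..1}" if "Y = percentile_mech p n \<omega>" for Y using Y01[of n p \<omega>, OF n p x01] that by simp
      have hgrid: "\<bar>(\<Sum>i<n. hfun (real m / real N) (\<omega> i)) / real n - (rad (real m / real N) * q - W (real m / real N))\<bar> < e0 \<and>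
         \<bar>(\<Sum>i<n. indicator (Bl (real m / real N)) (\<omega> i)) / real n - q\<bar> < e0" if m: "m \<le> N" for m
      proof -
        have "\<omega> \<notin> EH m" "\<omega> \<notin> EG m" using False m unfolding Bad_def by auto
        then show ?thesis using sp int_h[OF g01[OF m]] int_g[OF g01[OF m]] unfolding EH_def EG_def g_def by auto
      qed
      have Ylow: "a - e0 \<le> percentile_mech p n \<omega>"
      proof (cases "0 \<le> s1")
        case True
        have Fs: "F s1 < p" using Fa[of s1] True e0 by (simp add: s1_def p_def)
        have e1: "\<eta>1 = (p - F s1) / 2" using True by (simp add: eta1 s1_def p_def)
        have "\<omega> \<notin> E1" using False unfolding Bad_def by auto
        then have gd: "\<bar>(\<Sum>i<n. indicator {..s1} (\<omega> i)) / real n - F s1\<bar> < (p - F s1) / 2"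
          using sp e1 unfolding E1_def int_ind_le by auto
        have "1 \<le> real n * ((p - F s1) / 2)"
          using eta(5) mult_left_mono[OF eta(3), of "real n"] e1 by simp
        then have "s1 < percentile_mech p n \<omega>" by (rule quant_low[OF n p Fs _ gd])
        then show ?thesis by (simp add: s1_def)
      next
        case False
        then show ?thesis using Y01[of n p \<omega>, OF n p x01] by (simp add: s1_def)
      qed
      have Yhigh: "percentile_mech p n \<omega> \<le> b + e0"
      proof (cases "s2 \<le> 1")
        case True
        have Fs: "p < F s2" using Fb[of s2] True e0 by (simp add: s2_def p_def)
        have e2: "\<eta>2 = (F s2 - p) / 2" using True by (simp add: eta2 s2_def p_def)
        have "\<omega> \<notin> E2" using \<open>\<omega> \<notin> Bad\<close> unfolding Bad_def by auto
        then have gd: "\<bar>(\<Sum>i<n. indicator {..s2} (\<omega> i)) / real n - F s2\<bar> < (F s2 - p) / 2"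
          using sp e2 unfolding E2_def int_ind_le by auto
        have "percentile_mech p n \<omega> \<le> s2" by (rule quant_high[OF n p Fs gd])
        then show ?thesis by (simp add: s2_def)
      next
        case False
        then show ?thesis using Y01[of n p \<omega>, OF n p x01] by (simp add: s2_def)
      qed
      have ne: "1 / real n \<le> e0"
      proof -
        have "1 \<le> real n * e0" using eta(5) mult_left_mono[OF eta(2), of "real n"] by simp
        then show ?thesis using n by (simp add: field_simps)
      qed
      have "\<bar>Z \<omega> - c\<bar> \<le> 7 * e0"
        unfolding Z_def c_def p_def
        by (rule good_point[of ybar a b n N e0 \<omega>, OF yb mn ab IW n N(1) e0 N(2) ne x01 hgrid])
           (use Ylow Yhigh in \<open>simp_all add: p_def\<close>)
      then show ?thesis using False by simp
    qed
  qed
  have intB: "integrable (PM n) (indicator Bad :: _ \<Rightarrow> real)"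
    using mBad by (intro integrable_real_indicator) (auto simp: Q.emeasure_eq_measure)
  have int_rhs: "integrable (PM n) (\<lambda>\<omega>. 7 * e0 + C * indicator Bad \<omega>)"
    using intB by (intro Bochner_Integration.integrable_add integrable_mult_right) auto
  have "\<bar>(\<integral>\<omega>. Z \<omega> \<partial>PM n) - c\<bar> = \<bar>\<integral>\<omega>. Z \<omega> - c \<partial>PM n\<bar>"
    using intZ by (simp add: Bochner_Integration.integral_diff Q.prob_space)
  also have "\<dots> \<le> (\<integral>\<omega>. \<bar>Z \<omega> - c\<bar> \<partial>PM n)" by (rule integral_abs_bound)
  also have "\<dots> \<le> (\<integral>\<omega>. 7 * e0 + C * indicator Bad \<omega> \<partial>PM n)"
    using intZ int_rhs AEpt by (intro integral_mono_AE) auto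
  also have "\<dots> = (\<integral>\<omega>. 7 * e0 \<partial>PM n) + (\<integral>\<omega>. C * indicator Bad \<omega> \<partial>PM n)"
    by (rule Bochner_Integration.integral_add) (use intB in auto)
  also have "\<dots> = 7 * e0 + C * measure (PM n) Bad"
  proof -
    have "Bad \<inter> space (PM n) = Bad" using mBad sets.sets_into_space by blast
    then show ?thesis by (simp add: Q.prob_space)
  qed
  also have "\<dots> \<le> 7 * e0 + C * ((4 * real (N + 1) + 4) * ex)"
    using pBad unfolding C_def by (intro add_left_mono mult_left_mono) auto
  finally show ?thesis
    unfolding expected_SW_PM_def Z_def C_def c_def ex_def p_def by (simp add: mult.assoc)
qed


lemma main_conv:
  assumes yb: "ybar \<in> {0..1}" and mn: "\<forall>z\<in>{0..1}. W ybar \<le> W z"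
  shows "expected_SW_PM Mu q (F ybar) \<longlonglongrightarrow> q - W ybar"
proof -
  obtain a b where ab0: "0 \<le> a" "a \<le> ybar" "ybar \<le> b" "b \<le> 1"
    and IW: "\<And>t. a \<le> t \<Longrightarrow> t \<le> b \<Longrightarrow> W t = W ybar"
    and Fa: "\<And>s. 0 \<le> s \<Longrightarrow> s < a \<Longrightarrow> F s < F ybar"
    and Fb: "\<And>s. b < s \<Longrightarrow> s \<le> 1 \<Longrightarrow> F ybar < F s"
    using interval_I[OF yb mn] by blast
  have ab: "0 \<le> a" "a \<le> b" "b \<le> 1" using ab0 by auto
  show ?thesis
  proof (rule LIMSEQ_I)
    fix e :: real assume e: "0 < e"
    define e0 where "e0 = e / 10"
    have e0: "e0 > 0" using e by (simp add: e0_def)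
    define N :: nat where "N = nat \<lceil>1 / e0\<rceil> + 1"
    have N0: "N > 0" by (simp add: N_def)
    have "1 / e0 \<le> real N" using real_nat_ceiling_ge[of "1 / e0"] by (simp add: N_def)
    then have N1: "1 / real N \<le> e0" using e0 N0 by (simp add: field_simps)
    define \<eta>1 where "\<eta>1 = (if 0 \<le> a - e0 then (F ybar - F (a - e0)) / 2 else 1)"
    define \<eta>2 where "\<eta>2 = (if b + e0 \<le> 1 then (F (b + e0) - F ybar) / 2 else 1)"
    have eta12: "0 < \<eta>1" "0 < \<eta>2"
      using Fa[of "a - e0"] Fb[of "b + e0"] e0 by (auto simp: \<eta>1_def \<eta>2_def)
    define \<eta> where "\<eta> = min e0 (min \<eta>1 \<eta>2)"
    have eta: "0 < \<eta>" "\<eta> \<le> e0" "\<eta> \<le> \<eta>1" "\<eta> \<le> \<eta>2" using e0 eta12 by (auto simp: \<eta>_def)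
    define K0 where "K0 = (1 + \<bar>q - W ybar\<bar>) * (4 * real (N + 1) + 4)"
    have ex_eq: "exp (- 2 * real n * \<eta>\<^sup>2) = exp (- 2 * \<eta>\<^sup>2) ^ n" for n
    proof -
      have "- 2 * real n * \<eta>\<^sup>2 = real n * (- 2 * \<eta>\<^sup>2)" by (simp only: mult.commute mult.left_commute)
      then have "exp (- 2 * real n * \<eta>\<^sup>2) = exp (real n * (- 2 * \<eta>\<^sup>2))" by (rule arg_cong)
      also have "\<dots> = exp (- 2 * \<eta>\<^sup>2) ^ n" by (rule exp_of_nat_mult)
      finally show ?thesis .
    qed
    have "(\<lambda>n. exp (- 2 * \<eta>\<^sup>2) ^ n) \<longlonglongrightarrow> 0"
      by (rule LIMSEQ_power_zero) (use eta in simp)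
    then have "(\<lambda>n. K0 * exp (- 2 * real n * \<eta>\<^sup>2)) \<longlonglongrightarrow> K0 * 0"
      unfolding ex_eq by (intro tendsto_mult tendsto_const)
    then have ev1: "eventually (\<lambda>n. K0 * exp (- 2 * real n * \<eta>\<^sup>2) < e0) sequentially"
      using e0 by (intro order_tendstoD(2)) auto
    have ev2: "eventually (\<lambda>n. nat \<lceil>1 / \<eta>\<rceil> + 1 \<le> n) sequentially" by (rule eventually_ge_at_top)
    obtain no where no: "\<And>n. n \<ge> no \<Longrightarrow> K0 * exp (- 2 * real n * \<eta>\<^sup>2) < e0 \<and> nat \<lceil>1 / \<eta>\<rceil> + 1 \<le> n"
      using eventually_conj[OF ev1 ev2] unfolding eventually_sequentially by blast
    show "\<exists>no. \<forall>n\<ge>no. norm (expected_SW_PM Mu q (F ybar) n - (q - W ybar)) < e"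
    proof (intro exI allI impI)
      fix n assume "no \<le> n"
      then have h1: "K0 * exp (- 2 * real n * \<eta>\<^sup>2) < e0" and h2: "nat \<lceil>1 / \<eta>\<rceil> + 1 \<le> n" using no by auto
      have n: "n > 0" using h2 by simp
      have "1 / \<eta> \<le> real n" using real_nat_ceiling_ge[of "1 / \<eta>"] h2 by linarith
      then have nl: "1 \<le> real n * \<eta>" using eta by (simp add: field_simps)
      have "\<bar>expected_SW_PM Mu q (F ybar) n - (q - W ybar)\<bar>
          \<le> 7 * e0 + (1 + \<bar>q - W ybar\<bar>) * (4 * real (N + 1) + 4) * exp (- 2 * real n * \<eta>\<^sup>2)"
        by (rule fixed_n[OF yb mn ab IW Fa Fb e0 N0 N1 n eta nl \<eta>1_def \<eta>2_def])
      also have "\<dots> < 8 * e0"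
      proof -
        have "(1 + \<bar>q - W ybar\<bar>) * (4 * real (N + 1) + 4) * exp (- 2 * real n * \<eta>\<^sup>2) = K0 * exp (- 2 * real n * \<eta>\<^sup>2)"
          unfolding K0_def ..
        then show ?thesis using h1 by linarith
      qed
      also have "\<dots> < e" using e by (simp add: e0_def)
      finally show "norm (expected_SW_PM Mu q (F ybar) n - (q - W ybar)) < e" by simp
    qed
  qed
qed

end

theorem theorem3p4_ctx:
  fixes f :: "real \<Rightarrow> real" and q :: real
  assumes f_cont: "continuous_on {0..1} f"
    and f_nonneg: "\<And>x. x \<in> {0..1} \<Longrightarrow> 0 \<le> f x"
    and prob: "prob_space (mu_of f)"
    and q: "0 < q" "q < 1"
  shows "(\<exists>y\<in>{0..1}. \<forall>z\<in>{0..1}. W_cost (mu_of f) q y \<le> W_cost (mu_of f) q z)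
       \<and> (\<forall>ybar\<in>{0..1}. (\<forall>z\<in>{0..1}. W_cost (mu_of f) q ybar \<le> W_cost (mu_of f) q z)
            \<longrightarrow> PM_optimal (mu_of f) q (cdf_of (mu_of f) ybar))"
proof -
  interpret T: tctx f q by (rule tctx.intro) (fact f_cont, fact f_nonneg, fact prob, fact q(1), fact q(2))
  show ?thesis
  proof (intro conjI ballI impI)
    show "\<exists>y\<in>{0..1}. \<forall>z\<in>{0..1}. W_cost (mu_of f) q y \<le> W_cost (mu_of f) q z"
      by (rule T.W_min_exists)
    fix ybar assume yb: "ybar \<in> {0..1}" and mn: "\<forall>z\<in>{0..1}. W_cost (mu_of f) q ybar \<le> W_cost (mu_of f) q z"
    show "PM_optimal (mu_of f) q (cdf_of (mu_of f) ybar)"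
      unfolding PM_optimal_def
    proof (intro exI conjI)
      show "expected_SW_PM (mu_of f) q (cdf_of (mu_of f) ybar) \<longlonglongrightarrow> q - W_cost (mu_of f) q ybar"
        by (rule T.main_conv[OF yb mn])
      show "q - W_cost (mu_of f) q ybar \<in> (\<lambda>y. q - W_cost (mu_of f) q y) ` {0..1}" using yb by auto
      show "\<forall>y\<in>{0..1}. q - W_cost (mu_of f) q y \<le> q - W_cost (mu_of f) q ybar" using mn by auto
    qed
  qed
qed


theorem theorem3p4:
  fixes f :: "real \<Rightarrow> real" and q :: real
  assumes f_cont: "continuous_on {0..1} f"
    and f_nonneg: "\<And>x. x \<in> {0..1} \<Longrightarrow> 0 \<le> f x"
    and prob: "prob_space (mu_of f)"
    and q: "0 < q" "q < 1"
  shows "(\<exists>y\<in>{0..1}. \<forall>z\<in>{0..1}. W_cost (mu_of f) q y \<le> W_cost (mu_of f) q z)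
       \<and> (\<forall>ybar\<in>{0..1}. (\<forall>z\<in>{0..1}. W_cost (mu_of f) q ybar \<le> W_cost (mu_of f) q z)
            \<longrightarrow> PM_optimal (mu_of f) q (cdf_of (mu_of f) ybar))"
  by (rule theorem3p4_ctx) (fact f_cont, fact f_nonneg, fact prob, fact q(1), fact q(2))

end
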